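(* Let $f\in\mathrm{Rat}_2$ have fixed point multipliers $\mu_1,\mu_2,\mu_3$ (fixed points counted with multiplicity). Then $$\mu_1\mu_2\mu_3-(\mu_1+\mu_2+\mu_3)+2=0,$$ equivalently $\sigma_3=\sigma_1-2$. Conversely every unordered triple $\{\mu_1,\mu_2,\mu_3\}$ of complex numbers satisfying this equation occurs as the triple of fixed point multipliers of some $f\in\mathrm{Rat}_2$, and two maps in $\mathrm{Rat}_2$ are holomorphically conjugate if and only if they have the same unordered triple of fixed point multipliers. Consequently the map $\langle f\rangle\mapsto(\sigma_1,\sigma_2)$ is a bijection (canonical isomorphism) from $\mathcal M_2$ onto $\mathbf C^2$.
   Context: $\mathrm{Rat}_2$ is the space of holomorphic degree-$2$ maps of the Riemann sphere $\hat{\mathbf C}$. Every $f\in\mathrm{Rat}_2$ has exactly three fixed points counted with multiplicity; the multiplier of a fixed point $z_i$ is $f'(z_i)$ (computed in the coordinate $w=1/z$ if $z_i=\infty$), and a multiple fixed point is listed with its multiplicity (a fixed point has multiplier $1$ iff it is multiple). $\sigma_1=\mu_1+\mu_2+\mu_3$, $\sigma_2=\mu_1\mu_2+\mu_1\mu_3+\mu_2\mu_3$, $\sigma_3=\mu_1\mu_2\mu_3$. Two maps $f,\tilde f$ are holomorphically conjugate if $\tilde f=g\circ f\circ g^{-1}$ for some Möbius transformation $g\in\mathrm{PSL}(2,\mathbf C)$. $\mathcal M_2$ ("moduli space") is the set of holomorphic conjugacy classes $\langle f\rangle$ of maps $f\in\mathrm{Rat}_2$. *)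

theory Defs
  imports "HOL-Complex_Analysis.Complex_Analysis" "HOL-Library.Multiset"
begin

text \<open>The Riemann sphere: None is the point at infinity.\<close>
type_synonym sphere = "complex option"

definition hom :: "sphere \<Rightarrow> complex \<times> complex" where
  "hom p = (case p of Some z \<Rightarrow> (z, 1) | None \<Rightarrow> (1, 0))"

definition proj :: "complex \<Rightarrow> complex \<Rightarrow> sphere" where
  "proj u v = (if v = 0 then None else Some (u / v))"

text \<open>Coefficients (a0,a1,a2,b0,b1,b2) of two binary quadratic forms
  F = a0 X^2 + a1 XY + a2 Y^2, G = b0 X^2 + b1 XY + b2 Y^2.\<close>
type_synonym coeffs2 = "complex \<times> complex \<times> complex \<times> complex \<times> complex \<times> complex"

definition formF :: "coeffs2 \<Rightarrow> complex \<Rightarrow> complex \<Rightarrow> complex" where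
  "formF c X Y = (case c of (a0,a1,a2,b0,b1,b2) \<Rightarrow> a0*X^2 + a1*X*Y + a2*Y^2)"

definition formG :: "coeffs2 \<Rightarrow> complex \<Rightarrow> complex \<Rightarrow> complex" where
  "formG c X Y = (case c of (a0,a1,a2,b0,b1,b2) \<Rightarrow> b0*X^2 + b1*X*Y + b2*Y^2)"

definition coprime_forms :: "coeffs2 \<Rightarrow> bool" where
  "coprime_forms c \<longleftrightarrow> (\<forall>X Y. (X, Y) \<noteq> (0, 0) \<longrightarrow> \<not> (formF c X Y = 0 \<and> formG c X Y = 0))"

definition ratmap :: "coeffs2 \<Rightarrow> sphere \<Rightarrow> sphere" where
  "ratmap c p = (case hom p of (X, Y) \<Rightarrow> proj (formF c X Y) (formG c X Y))"

text \<open>Rat_2: holomorphic degree-2 self-maps of the sphere, i.e. maps [X:Y] \<mapsto> [F:G]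
  with F, G coprime binary quadratic forms.\<close>
definition Rat2 :: "(sphere \<Rightarrow> sphere) set" where
  "Rat2 = {ratmap c | c. coprime_forms c}"

definition mobius :: "complex \<Rightarrow> complex \<Rightarrow> complex \<Rightarrow> complex \<Rightarrow> sphere \<Rightarrow> sphere" where
  "mobius a b c d p = (case hom p of (X, Y) \<Rightarrow> proj (a*X + b*Y) (c*X + d*Y))"

definition hol_conj :: "(sphere \<Rightarrow> sphere) \<Rightarrow> (sphere \<Rightarrow> sphere) \<Rightarrow> bool" where
  "hol_conj f f' \<longleftrightarrow> (\<exists>a b c d. a*d - b*c \<noteq> 0 \<and>
       f' = mobius a b c d \<circ> f \<circ> inv (mobius a b c d))"

text \<open>Local coordinates: around a finite point the coordinate z, around infinity w = 1/z.\<close>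
definition from_chart :: "sphere \<Rightarrow> complex \<Rightarrow> sphere" where
  "from_chart p w = (case p of Some _ \<Rightarrow> Some w | None \<Rightarrow> (if w = 0 then None else Some (1 / w)))"

definition to_chart :: "sphere \<Rightarrow> sphere \<Rightarrow> complex" where
  "to_chart p q = (case p of
      Some _ \<Rightarrow> (case q of Some z \<Rightarrow> z | None \<Rightarrow> 0)
    | None \<Rightarrow> (case q of None \<Rightarrow> 0 | Some z \<Rightarrow> 1 / z))"

definition chart_pt :: "sphere \<Rightarrow> complex" where
  "chart_pt p = (case p of Some z \<Rightarrow> z | None \<Rightarrow> 0)"

definition local_expr :: "(sphere \<Rightarrow> sphere) \<Rightarrow> sphere \<Rightarrow> complex \<Rightarrow> complex" where
  "local_expr f p = (\<lambda>w. to_chart p (f (from_chart p w)))"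

definition multiplier :: "(sphere \<Rightarrow> sphere) \<Rightarrow> sphere \<Rightarrow> complex" where
  "multiplier f p = deriv (local_expr f p) (chart_pt p)"

definition fix_multiplicity :: "(sphere \<Rightarrow> sphere) \<Rightarrow> sphere \<Rightarrow> nat" where
  "fix_multiplicity f p = nat (zorder (\<lambda>w. local_expr f p w - w) (chart_pt p))"

definition fix_multipliers :: "(sphere \<Rightarrow> sphere) \<Rightarrow> complex multiset" where
  "fix_multipliers f = (\<Sum>p\<in>{p. f p = p}. replicate_mset (fix_multiplicity f p) (multiplier f p))"

definition sigma12 :: "complex multiset \<Rightarrow> complex \<times> complex" where
  "sigma12 M = (THE s. \<exists>m1 m2 m3. M = {#m1, m2, m3#} \<and>
                   s = (m1 + m2 + m3, m1*m2 + m1*m3 + m2*m3))"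

definition conj_rel :: "((sphere \<Rightarrow> sphere) \<times> (sphere \<Rightarrow> sphere)) set" where
  "conj_rel = {(f, g). f \<in> Rat2 \<and> g \<in> Rat2 \<and> hol_conj f g}"

definition M2 :: "(sphere \<Rightarrow> sphere) set set" where
  "M2 = Rat2 // conj_rel"

end

theory Submission
  imports Defs "HOL-Computational_Algebra.Fundamental_Theorem_Algebra"
begin

definition conjc :: "complex \<Rightarrow> complex \<Rightarrow> complex \<Rightarrow> complex \<Rightarrow> coeffs2 \<Rightarrow> coeffs2" where
  "conjc p q r s c = (case c of (a0,a1,a2,b0,b1,b2) \<Rightarrow>
   (s * (a0 * p^2 + a1 * p * r + a2 * r^2) - q * (b0 * p^2 + b1 * p * r + b2 * r^2),
    s * (2 * a0 * p * q + a1 * (p * s+q * r) + 2 * a2 * r * s) - q * (2 * b0 * p * q + b1 * (p * s+q * r) + 2 * b2 * r * s),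
    s * (a0 * q^2 + a1 * q * s + a2 * s^2) - q * (b0 * q^2 + b1 * q * s + b2 * s^2),
    p * (b0 * p^2 + b1 * p * r + b2 * r^2) - r * (a0 * p^2 + a1 * p * r + a2 * r^2),
    p * (2 * b0 * p * q + b1 * (p * s+q * r) + 2 * b2 * r * s) - r * (2 * a0 * p * q + a1 * (p * s+q * r) + 2 * a2 * r * s),
    p * (b0 * q^2 + b1 * q * s + b2 * s^2) - r * (a0 * q^2 + a1 * q * s + a2 * s^2)))"

lemma formF_conjc: "formF (conjc p q r s c) x y =
   s *  formF c (p * x+q * y) (r * x+s * y) - q *  formG c (p * x+q * y) (r * x+s * y)"
  by (cases c) (simp add: conjc_def formF_def formG_def power2_eq_square algebra_simps)

lemma formG_conjc: "formG (conjc p q r s c) x y =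
   p *  formG c (p * x+q * y) (r * x+s * y) - r *  formF c (p * x+q * y) (r * x+s * y)"
  by (cases c) (simp add: conjc_def formF_def formG_def power2_eq_square algebra_simps)

definition rr :: "coeffs2 \<Rightarrow> complex \<Rightarrow> complex" where
  "rr c w = formF c w 1 / formG c w 1"

definition Phi :: "coeffs2 \<Rightarrow> complex \<Rightarrow> complex \<Rightarrow> complex" where
  "Phi c x y = y *  formF c x y - x *  formG c x y"

definition Fx :: "coeffs2 \<Rightarrow> complex \<Rightarrow> complex \<Rightarrow> complex" where
  "Fx c x y = (case c of (a0,a1,a2,b0,b1,b2) \<Rightarrow> 2 * a0 * x + a1 * y)"
definition Gy :: "coeffs2 \<Rightarrow> complex \<Rightarrow> complex \<Rightarrow> complex" where
  "Gy c x y = (case c of (a0,a1,a2,b0,b1,b2) \<Rightarrow> b1 * x + 2 * b2 * y)"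

lemma trace_conjc: "Fx (conjc p q r s c) x y + Gy (conjc p q r s c) x y =
   (p * s - q * r) *  (Fx c (p * x+q * y) (r * x+s * y) + Gy c (p * x+q * y) (r * x+s * y))"
  by (cases c) (simp add: conjc_def Fx_def Gy_def power2_eq_square algebra_simps)

lemma Phi_conjc: "Phi (conjc p q r s c) x y = Phi c (p * x+q * y) (r * x+s * y)"
  unfolding Phi_def formF_conjc formG_conjc by (simp add: algebra_simps)

lemma formF_hom: "formF c (k * x) (k * y) = k^2 *  formF c x y"
  by (cases c) (simp add: formF_def power2_eq_square algebra_simps)
lemma formG_hom: "formG c (k * x) (k * y) = k^2 *  formG c x y"
  by (cases c) (simp add: formG_def power2_eq_square algebra_simps)

lemma conjc_comp_F: "formF (conjc p q r s (conjc p' q' r' s' c)) x y =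
   formF (conjc (p' * p+q' * r) (p' * q+q' * s) (r' * p+s' * r) (r' * q+s' * s) c) x y"
  unfolding formF_conjc formG_conjc by (simp add: algebra_simps)
lemma conjc_comp_G: "formG (conjc p q r s (conjc p' q' r' s' c)) x y =
   formG (conjc (p' * p+q' * r) (p' * q+q' * s) (r' * p+s' * r) (r' * q+s' * s) c) x y"
  unfolding formF_conjc formG_conjc by (simp add: algebra_simps)


lemma proj_scale: "k \<noteq> 0 \<Longrightarrow> proj (k * u) (k * v) = proj u v"
  by (simp add: proj_def)

lemma hom_proj: "(u, v) \<noteq> (0, 0) \<Longrightarrow> \<exists>k. k \<noteq> 0 \<and> hom (proj u v) = (k * u, k * v)"
proof (cases "v = 0")
  case True
  assume "(u, v) \<noteq> (0, 0)"
  with True have "u \<noteq> 0" by auto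
  then show ?thesis using True by (intro exI[of _ "1/u"]) (simp add: hom_def proj_def)
next
  case False
  then show ?thesis by (intro exI[of _ "1/v"]) (simp add: hom_def proj_def)
qed

lemma proj_hom: "proj (fst (hom p)) (snd (hom p)) = p"
  by (cases p) (auto simp: hom_def proj_def)

lemma hom_nz: "hom p \<noteq> (0, 0)"
  by (cases p) (auto simp: hom_def)

lemma hom_Some: "hom (Some z) = (z, 1)" and hom_None: "hom None = (1, 0)"
  by (simp_all add: hom_def)

lemma det_nz_vec: "a * d - b * c \<noteq> (0::complex) \<Longrightarrow> (u, v) \<noteq> (0, 0) \<Longrightarrow>
   (a * u + b * v, c * u + d * v) \<noteq> (0, 0)"
proof
  assume d: "a * d - b * c \<noteq> 0" and uv: "(u, v) \<noteq> (0, 0)" and e: "(a * u + b * v, c * u + d * v) = (0, 0)"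
  from e have e1: "a * u + b * v = 0" and e2: "c * u + d * v = 0" by auto
  have "(a * d - b * c) * u = d * (a * u + b * v) - b * (c * u + d * v)" by (simp add: algebra_simps)
  with e1 e2 d have "u = 0" by simp
  have "(a * d - b * c) * v = a * (c * u + d * v) - c * (a * u + b * v)" by (simp add: algebra_simps)
  with e1 e2 d have "v = 0" by simp
  with \<open>u = 0\<close> uv show False by simp
qed

lemma mobius_proj: "a * d - b * c \<noteq> 0 \<Longrightarrow> (u, v) \<noteq> (0, 0) \<Longrightarrow>
   mobius a b c d (proj u v) = proj (a * u + b * v) (c * u + d * v)"
proof -
  assume "a * d - b * c \<noteq> 0" and uv: "(u, v) \<noteq> (0, 0)"
  from hom_proj[OF uv] obtain k where k: "k \<noteq> 0" "hom (proj u v) = (k * u, k * v)" by blast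
  have "mobius a b c d (proj u v) = proj (k * (a * u + b * v)) (k * (c * u + d * v))"
    by (simp add: mobius_def k algebra_simps)
  also have "\<dots> = proj (a * u + b * v) (c * u + d * v)" by (rule proj_scale[OF k(1)])
  finally show ?thesis .
qed

lemma ratmap_proj: "(u, v) \<noteq> (0, 0) \<Longrightarrow>
   ratmap c (proj u v) = proj (formF c u v) (formG c u v)"
proof -
  assume uv: "(u, v) \<noteq> (0, 0)"
  from hom_proj[OF uv] obtain k where k: "k \<noteq> 0" "hom (proj u v) = (k * u, k * v)" by blast
  have "ratmap c (proj u v) = proj (k^2 * formF c u v) (k^2 * formG c u v)"
    by (simp add: ratmap_def k formF_hom formG_hom)
  also have "\<dots> = proj (formF c u v) (formG c u v)" by (rule proj_scale) (use k in simp)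
  finally show ?thesis .
qed

lemma mobius_alt: "mobius a b c d p = proj (a * fst (hom p) + b * snd (hom p)) (c * fst (hom p) + d * snd (hom p))"
  by (simp add: mobius_def split: prod.splits)

lemma ratmap_alt: "ratmap c p = proj (formF c (fst (hom p)) (snd (hom p))) (formG c (fst (hom p)) (snd (hom p)))"
  by (simp add: ratmap_def split: prod.splits)

lemma mobius_comp: "a * d - b * c \<noteq> 0 \<Longrightarrow> a' * d' - b' * c' \<noteq> 0 \<Longrightarrow>
   mobius a b c d (mobius a' b' c' d' p) =
   mobius (a * a' + b * c') (a * b' + b * d') (c * a' + d * c') (c * b' + d * d') p"
proof -
  assume d1: "a * d - b * c \<noteq> 0" and d2: "a' * d' - b' * c' \<noteq> 0"
  obtain X Y where h: "hom p = (X, Y)" by (cases "hom p")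
  have nz: "(X, Y) \<noteq> (0, 0)" using hom_nz[of p] h by simp
  have "mobius a b c d (mobius a' b' c' d' p) = mobius a b c d (proj (a' * X + b' * Y) (c' * X + d' * Y))"
    by (simp add: mobius_def h)
  also have "\<dots> = proj (a * (a' * X + b' * Y) + b * (c' * X + d' * Y)) (c * (a' * X + b' * Y) + d * (c' * X + d' * Y))"
    by (rule mobius_proj[OF d1 det_nz_vec[OF d2 nz]])
  also have "\<dots> = mobius (a * a' + b * c') (a * b' + b * d') (c * a' + d * c') (c * b' + d * d') p"
    by (simp add: mobius_def h algebra_simps)
  finally show ?thesis .
qed

lemma mobius_scalar: "k \<noteq> 0 \<Longrightarrow> mobius k 0 0 k p = p"
  using proj_scale[of k "fst (hom p)" "snd (hom p)"] proj_hom[of p]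
  by (simp add: mobius_alt)

lemma mobius_adj1: "a * d - b * c \<noteq> 0 \<Longrightarrow> mobius a b c d (mobius d (-b) (-c) a p) = p"
proof -
  assume d: "a * d - b * c \<noteq> 0"
  have d': "d * a - (-b) * (-c) \<noteq> 0" using d by (simp add: algebra_simps)
  have "mobius a b c d (mobius d (-b) (-c) a p) = mobius (a * d - b * c) 0 0 (a * d - b * c) p"
    by (simp add: mobius_comp[OF d d'] algebra_simps)
  also have "\<dots> = p" by (rule mobius_scalar[OF d])
  finally show ?thesis .
qed

lemma mobius_adj2: "a * d - b * c \<noteq> 0 \<Longrightarrow> mobius d (-b) (-c) a (mobius a b c d p) = p"
proof -
  assume d: "a * d - b * c \<noteq> 0"
  have d': "d * a - (-b) * (-c) \<noteq> 0" using d by (simp add: algebra_simps)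
  have "mobius d (-b) (-c) a (mobius a b c d p) = mobius (a * d - b * c) 0 0 (a * d - b * c) p"
    by (simp add: mobius_comp[OF d' d] algebra_simps)
  also have "\<dots> = p" by (rule mobius_scalar[OF d])
  finally show ?thesis .
qed

lemma inv_mobius: "a * d - b * c \<noteq> 0 \<Longrightarrow> inv (mobius a b c d) = mobius d (-b) (-c) a"
  by (rule inv_unique_comp) (auto simp: fun_eq_iff mobius_adj1 mobius_adj2)

lemma coprime_conjc: "coprime_forms c \<Longrightarrow> p * s - q * r \<noteq> 0 \<Longrightarrow> coprime_forms (conjc p q r s c)"
  unfolding coprime_forms_def
proof (intro allI impI notI)
  fix X Y
  assume cp: "\<forall>X Y. (X, Y) \<noteq> (0, 0) \<longrightarrow> \<not> (formF c X Y = 0 \<and> formG c X Y = 0)"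
    and d: "p * s - q * r \<noteq> 0" and nz: "(X, Y) \<noteq> (0, 0)"
    and z: "formF (conjc p q r s c) X Y = 0 \<and> formG (conjc p q r s c) X Y = 0"
  define U where "U = p * X + q * Y"
  define V where "V = r * X + s * Y"
  have UV: "(U, V) \<noteq> (0, 0)" unfolding U_def V_def by (rule det_nz_vec[OF d nz])
  have e1: "s * formF c U V - q * formG c U V = 0" using z by (simp add: formF_conjc U_def V_def)
  have e2: "p * formG c U V - r * formF c U V = 0" using z by (simp add: formG_conjc U_def V_def)
  have "(p * s - q * r) * formF c U V = p * (s * formF c U V - q * formG c U V) + q * (p * formG c U V - r * formF c U V)"
    by (simp add: algebra_simps)
  with e1 e2 d have "formF c U V = 0" by simp
  moreover have "(p * s - q * r) * formG c U V = r * (s * formF c U V - q * formG c U V) + s * (p * formG c U V - r * formF c U V)"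
    by (simp add: algebra_simps)
  with e1 e2 d have "formG c U V = 0" by simp
  ultimately show False using cp UV by blast
qed

lemma ratmap_conjc: "coprime_forms c \<Longrightarrow> p * s - q * r \<noteq> 0 \<Longrightarrow>
   ratmap (conjc p q r s c) x = mobius s (-q) (-r) p (ratmap c (mobius p q r s x))"
proof -
  assume cp: "coprime_forms c" and d: "p * s - q * r \<noteq> 0"
  obtain X Y where h: "hom x = (X, Y)" by (cases "hom x")
  have nz: "(X, Y) \<noteq> (0, 0)" using hom_nz[of x] h by simp
  define U where "U = p * X + q * Y"
  define V where "V = r * X + s * Y"
  have UV: "(U, V) \<noteq> (0, 0)" unfolding U_def V_def by (rule det_nz_vec[OF d nz])
  have HUV: "(formF c U V, formG c U V) \<noteq> (0, 0)" using cp UV unfolding coprime_forms_def by auto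
  have d': "s * p - (-q) * (-r) \<noteq> 0" using d by (simp add: algebra_simps)
  have "mobius s (-q) (-r) p (ratmap c (mobius p q r s x)) = mobius s (-q) (-r) p (ratmap c (proj U V))"
    by (simp add: mobius_def h U_def V_def)
  also have "\<dots> = mobius s (-q) (-r) p (proj (formF c U V) (formG c U V))"
    by (simp add: ratmap_proj[OF UV])
  also have "\<dots> = proj (s * formF c U V - q * formG c U V) (p * formG c U V - r * formF c U V)"
    by (subst mobius_proj[OF d' HUV]) (simp add: algebra_simps)
  also have "\<dots> = ratmap (conjc p q r s c) x"
    by (simp add: ratmap_def h formF_conjc formG_conjc U_def V_def)
  finally show ?thesis by simp
qed

lemma ratmap_scale: "k \<noteq> 0 \<Longrightarrow> (\<And>x y. formF c' x y = k * formF c x y) \<Longrightarrow>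
   (\<And>x y. formG c' x y = k * formG c x y) \<Longrightarrow> ratmap c' = ratmap c"
  by (auto simp: fun_eq_iff ratmap_alt proj_scale)

lemma rr_scale: "k \<noteq> 0 \<Longrightarrow> (\<And>x y. formF c' x y = k * formF c x y) \<Longrightarrow>
   (\<And>x y. formG c' x y = k * formG c x y) \<Longrightarrow> rr c' = rr c"
  by (auto simp: fun_eq_iff rr_def)

lemma hol_conj_alt: "hol_conj f g \<longleftrightarrow> (\<exists>a b c d. a * d - b * c \<noteq> 0 \<and>
   g = mobius a b c d \<circ> f \<circ> mobius d (-b) (-c) a)"
  unfolding hol_conj_def by (metis inv_mobius)

lemma hol_conj_ratmap_conjc: "coprime_forms c \<Longrightarrow> p * s - q * r \<noteq> 0 \<Longrightarrow>
   hol_conj (ratmap c) (ratmap (conjc p q r s c))"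
  unfolding hol_conj_alt
  by (rule exI[of _ s], rule exI[of _ "-q"], rule exI[of _ "-r"], rule exI[of _ p])
     (auto simp: fun_eq_iff ratmap_conjc algebra_simps)

lemma hol_conj_refl: "hol_conj f f"
  unfolding hol_conj_alt
  by (rule exI[of _ 1], rule exI[of _ 0], rule exI[of _ 0], rule exI[of _ 1])
     (simp add: fun_eq_iff mobius_scalar[of 1, simplified])

lemma hol_conj_sym: "hol_conj f g \<Longrightarrow> hol_conj g f"
  unfolding hol_conj_alt
proof (elim exE conjE)
  fix a b c d
  assume d: "a * d - b * c \<noteq> 0" and g: "g = mobius a b c d \<circ> f \<circ> mobius d (- b) (- c) a"
  show "\<exists>a b c d. a * d - b * c \<noteq> 0 \<and> f = mobius a b c d \<circ> g \<circ> mobius d (- b) (- c) a"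
    by (rule exI[of _ d], rule exI[of _ "-b"], rule exI[of _ "-c"], rule exI[of _ a])
       (use d in \<open>auto simp: g fun_eq_iff mobius_adj1 mobius_adj2 algebra_simps\<close>)
qed

lemma hol_conj_trans: "hol_conj f g \<Longrightarrow> hol_conj g h \<Longrightarrow> hol_conj f h"
  unfolding hol_conj_alt
proof (elim exE conjE)
  fix a b c d a' b' c' d'
  assume d: "a * d - b * c \<noteq> 0" and g: "g = mobius a b c d \<circ> f \<circ> mobius d (- b) (- c) a"
    and d': "a' * d' - b' * c' \<noteq> 0" and h: "h = mobius a' b' c' d' \<circ> g \<circ> mobius d' (- b') (- c') a'"
  have da: "d * a - (-b) * (-c) \<noteq> 0" using d by (simp add: algebra_simps)
  have da': "d' * a' - (-b') * (-c') \<noteq> 0" using d' by (simp add: algebra_simps)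
  have dd: "(a' * a + b' * c) * (c' * b + d' * d) - (a' * b + b' * d) * (c' * a + d' * c) \<noteq> 0"
  proof -
    have "(a' * a + b' * c) * (c' * b + d' * d) - (a' * b + b' * d) * (c' * a + d' * c) = (a' * d' - b' * c') * (a * d - b * c)"
      by (simp add: algebra_simps)
    with d d' show ?thesis by simp
  qed
  show "\<exists>a b c d. a * d - b * c \<noteq> 0 \<and> h = mobius a b c d \<circ> f \<circ> mobius d (- b) (- c) a"
    apply (rule exI[of _ "a' * a + b' * c"], rule exI[of _ "a' * b + b' * d"],
       rule exI[of _ "c' * a + d' * c"], rule exI[of _ "c' * b + d' * d"])
    apply (rule conjI[OF dd])
    apply (simp add: h g fun_eq_iff mobius_comp[OF d' d] mobius_comp[OF da da'] algebra_simps)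
    done
qed


lemma to_chart_Some_proj: "to_chart (Some z) (proj u v) = u / v"
  by (simp add: to_chart_def proj_def)

lemma to_chart_None_proj: "to_chart None (proj u v) = v / u"
  by (simp add: to_chart_def proj_def)

lemma local_Some: "local_expr (ratmap c) (Some z) = rr c"
  by (simp add: fun_eq_iff local_expr_def from_chart_def ratmap_def hom_Some to_chart_Some_proj rr_def)

lemma local_None: "local_expr (ratmap c) None = (\<lambda>w. formG c 1 w / formF c 1 w)"
proof
  fix w
  show "local_expr (ratmap c) None w = formG c 1 w / formF c 1 w"
  proof (cases "w = 0")
    case True
    then show ?thesis
      by (simp add: local_expr_def from_chart_def ratmap_def hom_None to_chart_None_proj)
  next
    case False
    have "local_expr (ratmap c) None w = to_chart None (proj (formF c (1/w) 1) (formG c (1/w) 1))"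
      using False by (simp add: local_expr_def from_chart_def ratmap_def hom_Some)
    also have "proj (formF c (1/w) 1) (formG c (1/w) 1) = proj (w^2 * formF c (1/w) 1) (w^2 * formG c (1/w) 1)"
      using False by (simp add: proj_scale)
    also have "\<dots> = proj (formF c 1 w) (formG c 1 w)"
      using formF_hom[of c w "1/w" 1] formG_hom[of c w "1/w" 1] False by simp
    finally show ?thesis by (simp add: to_chart_None_proj)
  qed
qed

lemma rr_conjc_id: "rr (conjc 1 0 0 1 c) = rr c"
  by (simp add: fun_eq_iff rr_def formF_conjc formG_conjc)

lemma rr_conjc_J: "rr (conjc 0 1 1 0 c) = (\<lambda>w. formG c 1 w / formF c 1 w)"
  by (simp add: fun_eq_iff rr_def formF_conjc formG_conjc)

lemma chart_data: "\<exists>s1 s2 s3 s4. s1 * s4 - s2 * s3 \<noteq> 0 \<and>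
    hom p = (s1 * chart_pt p + s2, s3 * chart_pt p + s4) \<and>
    (\<forall>c. local_expr (ratmap c) p = rr (conjc s1 s2 s3 s4 c))"
proof (cases p)
  case None
  then show ?thesis
    by (intro exI[of _ 0] exI[of _ 1]) (simp add: hom_None chart_pt_def local_None rr_conjc_J)
next
  case (Some z)
  then show ?thesis
    by (intro exI[of _ 1] exI[of _ 0]) (simp add: hom_Some chart_pt_def local_Some rr_conjc_id)
qed

lemma deriv_fixed:
  assumes g: "formG c w 1 \<noteq> 0" and f: "formF c w 1 = w * formG c w 1"
  shows "deriv (rr c) w = (Fx c w 1 + Gy c w 1) / formG c w 1 - 2"
proof -
  obtain a0 a1 a2 b0 b1 b2 where c: "c = (a0,a1,a2,b0,b1,b2)" by (cases c) auto
  let ?F = "a0 * w^2 + a1 * w + a2" and ?G = "b0 * w^2 + b1 * w + b2"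
  have G: "?G \<noteq> 0" using g by (simp add: c formG_def)
  have F: "?F = w * ?G" using f by (simp add: c formF_def formG_def)
  have rr: "rr c = (\<lambda>w. (a0 * w^2 + a1 * w + a2) / (b0 * w^2 + b1 * w + b2))"
    by (simp add: fun_eq_iff rr_def c formF_def formG_def)
  have dF: "((\<lambda>w. a0 * w^2 + a1 * w + a2) has_field_derivative (2 * a0 * w + a1)) (at w)"
    by (auto intro!: derivative_eq_intros simp: power2_eq_square algebra_simps)
  have dG: "((\<lambda>w. b0 * w^2 + b1 * w + b2) has_field_derivative (2 * b0 * w + b1)) (at w)"
    by (auto intro!: derivative_eq_intros simp: power2_eq_square algebra_simps)
  have "(rr c has_field_derivative ((2 * a0 * w + a1) * ?G - ?F * (2 * b0 * w + b1)) / ?G^2) (at w)"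
    unfolding rr using DERIV_divide[OF dF dG G] by (simp add: power2_eq_square)
  then have "deriv (rr c) w = ((2 * a0 * w + a1) * ?G - ?F * (2 * b0 * w + b1)) / ?G^2"
    by (rule DERIV_imp_deriv)
  also have "\<dots> = ((2 * a0 * w + a1) - w * (2 * b0 * w + b1)) / ?G"
  proof -
    have "((2 * a0 * w + a1) * ?G - ?F * (2 * b0 * w + b1)) = ?G * ((2 * a0 * w + a1) - w * (2 * b0 * w + b1))"
      unfolding F by (simp add: algebra_simps)
    then show ?thesis using G by (simp add: power2_eq_square)
  qed
  also have "\<dots> = (Fx c w 1 + Gy c w 1 - 2 * ?G) / ?G"
    by (simp add: c Fx_def Gy_def algebra_simps power2_eq_square)
  also have "\<dots> = (Fx c w 1 + Gy c w 1) / formG c w 1 - 2"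
  proof -
    have G': "formG c w 1 = ?G" by (simp add: c formG_def)
    have "(2 * ?G) / ?G = 2" by (rule nonzero_mult_div_cancel_right[OF G])
    then show ?thesis unfolding G' by (simp add: diff_divide_distrib)
  qed
  finally show ?thesis .
qed

lemma zorder_fact:
  assumes "open S" "w0 \<in> S" "h holomorphic_on S" "h w0 \<noteq> 0"
    and "\<And>w. w \<in> S \<Longrightarrow> f w = (w - w0)^n * h w"
  shows "zorder f w0 = int n"
  by (rule zorder_eqI[OF assms(1-4)]) (simp add: assms(5) mult.commute)


definition Phipoly :: "coeffs2 \<Rightarrow> complex poly" where
  "Phipoly c = (case c of (a0,a1,a2,b0,b1,b2) \<Rightarrow> [:a2, a1 - b2, a0 - b1, -b0:])"

lemma poly_Phipoly: "poly (Phipoly c) t = Phi c t 1"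
  by (cases c) (simp add: Phipoly_def Phi_def formF_def formG_def algebra_simps power2_eq_square)

lemma Phipoly_nz: "coprime_forms c \<Longrightarrow> Phipoly c \<noteq> 0"
proof
  assume cp: "coprime_forms c" and z: "Phipoly c = 0"
  obtain a0 a1 a2 b0 b1 b2 where c: "c = (a0,a1,a2,b0,b1,b2)" by (cases c) auto
  from z have h: "a2 = 0" "a1 = b2" "a0 = b1" "b0 = 0" by (auto simp: Phipoly_def c)
  show False
  proof (cases "a0 = 0 \<and> a1 = 0")
    case True
    then have "formF c 1 0 = 0" "formG c 1 0 = 0" using h by (auto simp: c formF_def formG_def)
    moreover have "(1::complex, 0::complex) \<noteq> (0, 0)" by simp
    ultimately show False using cp unfolding coprime_forms_def by blast
  next
    case False
    then have "(-a1, a0) \<noteq> (0, 0)" by auto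
    moreover have "formF c (-a1) a0 = 0" "formG c (-a1) a0 = 0"
      using h by (auto simp: c formF_def formG_def power2_eq_square algebra_simps)
    ultimately show False using cp unfolding coprime_forms_def by blast
  qed
qed

lemma Phi_hom: "Phi c (k * x) (k * y) = k^3 * Phi c x y"
  by (simp add: Phi_def formF_hom formG_hom power2_eq_square power3_eq_cube algebra_simps)

lemma Fx_hom: "Fx c (k * x) (k * y) = k * Fx c x y" and Gy_hom: "Gy c (k * x) (k * y) = k * Gy c x y"
  by (cases c, simp add: Fx_def Gy_def algebra_simps)+

lemma formF_holo [holomorphic_intros]: "f holomorphic_on S \<Longrightarrow> g holomorphic_on S \<Longrightarrow>
  (\<lambda>w. formF c (f w) (g w)) holomorphic_on S"
  by (cases c) (simp add: formF_def, intro holomorphic_intros)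

lemma formG_holo [holomorphic_intros]: "f holomorphic_on S \<Longrightarrow> g holomorphic_on S \<Longrightarrow>
  (\<lambda>w. formG c (f w) (g w)) holomorphic_on S"
  by (cases c) (simp add: formG_def, intro holomorphic_intros)

lemma open_formG_nz: "open {w. formG c w 1 \<noteq> 0}"
proof -
  have "continuous_on UNIV (\<lambda>w. formG c w 1)"
    by (rule holomorphic_on_imp_continuous_on) (intro holomorphic_intros)
  then show ?thesis using open_Collect_neq[of "\<lambda>w. formG c w 1" "\<lambda>_. 0"] by simp
qed

lemma zorder_rr:
  assumes "open S" "w0 \<in> S" "\<And>w. w \<in> S \<Longrightarrow> formG c w 1 \<noteq> 0"
    "h holomorphic_on S" "h w0 \<noteq> 0" "\<And>w. w \<in> S \<Longrightarrow> Phi c w 1 = (w - w0)^n * h w"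
  shows "zorder (\<lambda>w. rr c w - w) w0 = int n"
proof (rule zorder_fact[OF assms(1,2)])
  show "(\<lambda>w. h w / formG c w 1) holomorphic_on S"
    using assms(3,4) by (intro holomorphic_intros) auto
  show "h w0 / formG c w0 1 \<noteq> 0" using assms(2,3,5) by simp
  fix w assume w: "w \<in> S"
  have "rr c w - w = Phi c w 1 / formG c w 1"
    using assms(3)[OF w] by (simp add: rr_def Phi_def field_simps)
  also have "\<dots> = (w - w0)^n * (h w / formG c w 1)" using assms(6)[OF w] by simp
  finally show "rr c w - w = (w - w0)^n * (h w / formG c w 1)" .
qed

lemma KL:
  fixes p q r s k w1 w2 :: complex
  assumes cp: "coprime_forms c" and d: "p * s - q * r \<noteq> 0" and k: "k \<noteq> 0"
    and e1: "p * w1 + q = k * w2" and e2: "r * w1 + s = k"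
    and g: "formG c w2 1 \<noteq> 0" and f: "formF c w2 1 = w2 * formG c w2 1"
  shows "deriv (rr (conjc p q r s c)) w1 = deriv (rr c) w2 \<and>
         zorder (\<lambda>w. rr (conjc p q r s c) w - w) w1 = zorder (\<lambda>w. rr c w - w) w2"
proof -
  define c' where "c' = conjc p q r s c"
  define G2 where "G2 = formG c w2 1"
  define D where "D = p * s - q * r"
  have e1': "p * w1 + q * 1 = k * w2" and e2': "r * w1 + s * 1 = k * 1" using e1 e2 by simp_all
  have FT: "formF c (p * w1 + q * 1) (r * w1 + s * 1) = k^2 * (w2 * G2)"
    unfolding e1' e2' formF_hom f G2_def ..
  have GT: "formG c (p * w1 + q * 1) (r * w1 + s * 1) = k^2 * G2"
    unfolding e1' e2' formG_hom G2_def ..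
  have kp: "k * (p - r * w2) = D"
  proof -
    have "k * (p - r * w2) = p * k - r * (k * w2)" by (simp add: algebra_simps)
    also have "\<dots> = p * (r * w1 + s) - r * (p * w1 + q)" by (simp add: e1 e2)
    also have "\<dots> = D" by (simp add: D_def algebra_simps)
    finally show ?thesis .
  qed
  have ks: "k * (s * w2 - q) = D * w1"
  proof -
    have "k * (s * w2 - q) = s * (k * w2) - q * k" by (simp add: algebra_simps)
    also have "\<dots> = s * (p * w1 + q) - q * (r * w1 + s)" by (simp add: e1 e2)
    also have "\<dots> = D * w1" by (simp add: D_def algebra_simps)
    finally show ?thesis .
  qed
  have G1: "formG c' w1 1 = k * G2 * D"
  proof -
    have "formG c' w1 1 = k^2 * G2 * (p - r * w2)"
      unfolding c'_def formG_conjc FT GT by (simp add: algebra_simps)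
    also have "\<dots> = k * G2 * D" unfolding kp[symmetric] by (simp add: power2_eq_square algebra_simps)
    finally show ?thesis .
  qed
  have F1: "formF c' w1 1 = w1 * formG c' w1 1"
  proof -
    have "formF c' w1 1 = k^2 * G2 * (s * w2 - q)"
      unfolding c'_def formF_conjc FT GT by (simp add: algebra_simps)
    also have "\<dots> = k * G2 * (D * w1)" unfolding ks[symmetric] by (simp add: power2_eq_square algebra_simps)
    finally show ?thesis unfolding G1 by (simp add: algebra_simps)
  qed
  have G2nz: "G2 \<noteq> 0" using g G2_def by simp
  have Dnz: "D \<noteq> 0" using d D_def by simp
  have G1nz: "formG c' w1 1 \<noteq> 0" using G1 G2nz Dnz k by simp
  have tr: "Fx c' w1 1 + Gy c' w1 1 = D * k * (Fx c w2 1 + Gy c w2 1)"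
    unfolding c'_def trace_conjc e1' e2' Fx_hom Gy_hom D_def by (simp add: algebra_simps)
  have der: "deriv (rr c') w1 = deriv (rr c) w2"
  proof -
    have "D * k * (Fx c w2 1 + Gy c w2 1) / (k * G2 * D) = (Fx c w2 1 + Gy c w2 1) / G2"
      using k Dnz G2nz by (simp add: divide_simps)
    then show ?thesis
      unfolding deriv_fixed[OF G1nz F1] deriv_fixed[OF g f] tr G1 G2_def[symmetric] by simp
  qed
  have Pnz: "Phipoly c \<noteq> 0" by (rule Phipoly_nz[OF cp])
  obtain Q where Q: "Phipoly c = [:- w2, 1:] ^ order w2 (Phipoly c) * Q" "\<not> [:- w2, 1:] dvd Q"
    using order_decomp[OF Pnz] by blast
  define n where "n = order w2 (Phipoly c)"
  have Qw2: "poly Q w2 \<noteq> 0" using Q(2) by (simp add: poly_eq_0_iff_dvd)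
  have PhiQ: "Phi c t 1 = (t - w2)^n * poly Q t" for t
    using arg_cong[OF Q(1), of "\<lambda>P. poly P t"] by (simp add: poly_Phipoly n_def)
  have z2: "zorder (\<lambda>w. rr c w - w) w2 = int n"
    by (rule zorder_rr[OF open_formG_nz, where h="poly Q"])
       (use g Qw2 in \<open>auto intro!: holomorphic_intros simp: PhiQ\<close>)
  define S where "S = {w. r * w + s \<noteq> 0} \<inter> {w. formG c' w 1 \<noteq> 0}"
  have openS: "open S"
  proof -
    have "continuous_on UNIV (\<lambda>w. r * w + s)" by (intro continuous_intros)
    then have "open {w. r * w + s \<noteq> 0}" using open_Collect_neq[of "\<lambda>w. r * w + s" "\<lambda>_. 0"] by simp
    then show ?thesis unfolding S_def using open_formG_nz by blast
  qed
  define h where "h = (\<lambda>w. (r * w + s)^3 * ((D / k) / (r * w + s))^n * poly Q ((p * w + q) / (r * w + s)))"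
  have z1: "zorder (\<lambda>w. rr c' w - w) w1 = int n"
  proof (rule zorder_rr[OF openS, where h=h])
    show "w1 \<in> S" using e2 k G1nz by (simp add: S_def)
    show "formG c' w 1 \<noteq> 0" if "w \<in> S" for w using that by (simp add: S_def)
    show "h holomorphic_on S" unfolding h_def S_def by (intro holomorphic_intros) auto
    have "(p * w1 + q) / (r * w1 + s) = w2" using e1 e2 k by simp
    then show "h w1 \<noteq> 0" unfolding h_def using e2 k Dnz Qw2 by simp
    fix w assume w: "w \<in> S"
    then have y: "r * w + s \<noteq> 0" by (simp add: S_def)
    have "Phi c' w 1 = Phi c (p * w + q) (r * w + s)" unfolding c'_def Phi_conjc by simp
    also have "\<dots> = Phi c ((r * w + s) * ((p * w + q) / (r * w + s))) ((r * w + s) * 1)"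
      using y by simp
    also have "\<dots> = (r * w + s)^3 * Phi c ((p * w + q) / (r * w + s)) 1" by (rule Phi_hom)
    also have "\<dots> = (r * w + s)^3 * (((p * w + q) / (r * w + s) - w2)^n * poly Q ((p * w + q) / (r * w + s)))"
      by (simp add: PhiQ)
    also have "(p * w + q) / (r * w + s) - w2 = (w - w1) * ((D / k) / (r * w + s))"
    proof -
      have "(p * w + q) - w2 * (r * w + s) = (w - w1) * (D / k)"
      proof -
        have "k * ((p * w + q) - w2 * (r * w + s)) = k * (w - w1) * (D / k)"
        proof -
          have "k * ((p * w + q) - w2 * (r * w + s)) = w * (k * (p - r * w2)) - (k * (s * w2 - q))"
            by (simp add: algebra_simps)
          also have "\<dots> = (w - w1) * D" unfolding kp ks by (simp add: algebra_simps)
          finally show ?thesis using k by simp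
        qed
        then show ?thesis using k by (metis mult.assoc mult_left_cancel)
      qed
      then show ?thesis using y by (simp add: field_simps)
    qed
    finally show "Phi c' w 1 = (w - w1)^n * h w" unfolding h_def by (simp only: power_mult_distrib mult_ac)
  qed
  show ?thesis using der z1 z2 unfolding c'_def by simp
qed


lemma conjc_scalar_F: "formF (conjc (k * p) (k * q) (k * r) (k * s) c) x y = k^3 * formF (conjc p q r s c) x y"
proof -
  have a: "k * p * x + k * q * y = k * (p * x + q * y)" "k * r * x + k * s * y = k * (r * x + s * y)"
    by (simp_all add: algebra_simps)
  show ?thesis unfolding formF_conjc a formF_hom formG_hom by (simp add: power2_eq_square power3_eq_cube algebra_simps)
qed

lemma conjc_scalar_G: "formG (conjc (k * p) (k * q) (k * r) (k * s) c) x y = k^3 * formG (conjc p q r s c) x y"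
proof -
  have a: "k * p * x + k * q * y = k * (p * x + q * y)" "k * r * x + k * s * y = k * (r * x + s * y)"
    by (simp_all add: algebra_simps)
  show ?thesis unfolding formG_conjc a formF_hom formG_hom by (simp add: power2_eq_square power3_eq_cube algebra_simps)
qed

lemma rr_comp: "rr (conjc p q r s (conjc p' q' r' s' c)) =
   rr (conjc (p' * p + q' * r) (p' * q + q' * s) (r' * p + s' * r) (r' * q + s' * s) c)"
  unfolding rr_def conjc_comp_F conjc_comp_G ..

lemma proj_eq_Some: "proj u v = Some z \<Longrightarrow> v \<noteq> 0 \<and> u = z * v"
  by (auto simp: proj_def split: if_splits)

lemma CI:
  assumes cp: "coprime_forms c0"
    and d1: "p1 * s1 - q1 * r1 \<noteq> 0" and d2: "p2 * s2 - q2 * r2 \<noteq> 0" and k: "k \<noteq> 0"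
    and e1: "p1 * w1 + q1 = k * (p2 * w2 + q2)" and e2: "r1 * w1 + s1 = k * (r2 * w2 + s2)"
    and fx: "ratmap c0 (proj (p2 * w2 + q2) (r2 * w2 + s2)) = proj (p2 * w2 + q2) (r2 * w2 + s2)"
  shows "deriv (rr (conjc p1 q1 r1 s1 c0)) w1 = deriv (rr (conjc p2 q2 r2 s2 c0)) w2 \<and>
    zorder (\<lambda>w. rr (conjc p1 q1 r1 s1 c0) w - w) w1 = zorder (\<lambda>w. rr (conjc p2 q2 r2 s2 c0) w - w) w2"
proof -
  define c where "c = conjc p2 q2 r2 s2 c0"
  define D2 where "D2 = p2 * s2 - q2 * r2"
  have D2nz: "D2 \<noteq> 0" using d2 D2_def by simp
  have cpc: "coprime_forms c" unfolding c_def by (rule coprime_conjc[OF cp d2])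
  define \<alpha> where "\<alpha> = s2 * p1 - q2 * r1"
  define \<beta> where "\<beta> = s2 * q1 - q2 * s1"
  define \<gamma> where "\<gamma> = p2 * r1 - r2 * p1"
  define \<delta> where "\<delta> = p2 * s1 - r2 * q1"
  have dT: "\<alpha> * \<delta> - \<beta> * \<gamma> = D2 * (p1 * s1 - q1 * r1)"
    unfolding \<alpha>_def \<beta>_def \<gamma>_def \<delta>_def D2_def by (simp add: algebra_simps)
  have dTnz: "\<alpha> * \<delta> - \<beta> * \<gamma> \<noteq> 0" using dT D2nz d1 by simp
  have rrT: "rr (conjc \<alpha> \<beta> \<gamma> \<delta> c) = rr (conjc p1 q1 r1 s1 c0)"
  proof -
    have m: "p2 * \<alpha> + q2 * \<gamma> = D2 * p1" "p2 * \<beta> + q2 * \<delta> = D2 * q1"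
       "r2 * \<alpha> + s2 * \<gamma> = D2 * r1" "r2 * \<beta> + s2 * \<delta> = D2 * s1"
      unfolding \<alpha>_def \<beta>_def \<gamma>_def \<delta>_def D2_def by (simp_all add: algebra_simps)
    show ?thesis unfolding c_def
      by (rule rr_scale[of "D2^3"]) (use D2nz in \<open>simp_all add: conjc_comp_F conjc_comp_G m conjc_scalar_F conjc_scalar_G\<close>)
  qed
  have T1: "\<alpha> * w1 + \<beta> = (k * D2) * w2"
  proof -
    have "\<alpha> * w1 + \<beta> = s2 * (p1 * w1 + q1) - q2 * (r1 * w1 + s1)" unfolding \<alpha>_def \<beta>_def by (simp add: algebra_simps)
    also have "\<dots> = k * (s2 * (p2 * w2 + q2) - q2 * (r2 * w2 + s2))" unfolding e1 e2 by (simp add: algebra_simps)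
    also have "\<dots> = (k * D2) * w2" unfolding D2_def by (simp add: algebra_simps)
    finally show ?thesis .
  qed
  have T2: "\<gamma> * w1 + \<delta> = k * D2"
  proof -
    have "\<gamma> * w1 + \<delta> = p2 * (r1 * w1 + s1) - r2 * (p1 * w1 + q1)" unfolding \<gamma>_def \<delta>_def by (simp add: algebra_simps)
    also have "\<dots> = k * (p2 * (r2 * w2 + s2) - r2 * (p2 * w2 + q2))" unfolding e1 e2 by (simp add: algebra_simps)
    also have "\<dots> = k * D2" unfolding D2_def by (simp add: algebra_simps)
    finally show ?thesis .
  qed
  have nzv: "(w2, 1::complex) \<noteq> (0, 0)" by simp
  have "ratmap c (Some w2) = mobius s2 (- q2) (- r2) p2 (ratmap c0 (mobius p2 q2 r2 s2 (Some w2)))"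
    unfolding c_def by (rule ratmap_conjc[OF cp d2])
  also have "mobius p2 q2 r2 s2 (Some w2) = proj (p2 * w2 + q2) (r2 * w2 + s2)"
    by (simp add: mobius_def hom_Some)
  also have "ratmap c0 \<dots> = \<dots>" by (rule fx)
  also have "proj (p2 * w2 + q2) (r2 * w2 + s2) = mobius p2 q2 r2 s2 (Some w2)"
    by (simp add: mobius_def hom_Some)
  also have "mobius s2 (- q2) (- r2) p2 (mobius p2 q2 r2 s2 (Some w2)) = Some w2"
  proof -
    have "p2 * s2 - q2 * r2 \<noteq> 0" by (rule d2)
    then show ?thesis by (rule mobius_adj2)
  qed
  finally have "ratmap c (Some w2) = Some w2" .
  then have "proj (formF c w2 1) (formG c w2 1) = Some w2" by (simp add: ratmap_def hom_Some)
  from proj_eq_Some[OF this] have g: "formG c w2 1 \<noteq> 0" and f: "formF c w2 1 = w2 * formG c w2 1" by auto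
  have kD: "k * D2 \<noteq> 0" using k D2nz by simp
  show ?thesis using KL[OF cpc dTnz kD T1 T2 g f] rrT unfolding c_def by simp
qed

lemma rr_conjc_adj: "coprime_forms c \<Longrightarrow> m1 * m4 - m2 * m3 \<noteq> 0 \<Longrightarrow>
  mobius m1 m2 m3 m4 \<circ> ratmap c \<circ> mobius m4 (-m2) (-m3) m1 = ratmap (conjc m4 (-m2) (-m3) m1 c)"
proof -
  assume cp: "coprime_forms c" and d: "m1 * m4 - m2 * m3 \<noteq> 0"
  have d': "m4 * m1 - (-m2) * (-m3) \<noteq> 0" using d by (simp add: algebra_simps)
  show ?thesis by (simp add: fun_eq_iff ratmap_conjc[OF cp d'])
qed

lemma PI:
  assumes cp: "coprime_forms c" and d: "m1 * m4 - m2 * m3 \<noteq> 0" and fx: "ratmap c x = x"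
  defines "g \<equiv> mobius m1 m2 m3 m4 \<circ> ratmap c \<circ> mobius m4 (-m2) (-m3) m1"
  shows "multiplier g (mobius m1 m2 m3 m4 x) = multiplier (ratmap c) x \<and>
         fix_multiplicity g (mobius m1 m2 m3 m4 x) = fix_multiplicity (ratmap c) x"
proof -
  define y where "y = mobius m1 m2 m3 m4 x"
  obtain s1 s2 s3 s4 where S: "s1 * s4 - s2 * s3 \<noteq> 0" "hom x = (s1 * chart_pt x + s2, s3 * chart_pt x + s4)"
    "\<And>c. local_expr (ratmap c) x = rr (conjc s1 s2 s3 s4 c)" using chart_data[of x] by blast
  obtain t1 t2 t3 t4 where T: "t1 * t4 - t2 * t3 \<noteq> 0" "hom y = (t1 * chart_pt y + t2, t3 * chart_pt y + t4)"
    "\<And>c. local_expr (ratmap c) y = rr (conjc t1 t2 t3 t4 c)" using chart_data[of y] by blast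
  have g: "g = ratmap (conjc m4 (-m2) (-m3) m1 c)" unfolding g_def by (rule rr_conjc_adj[OF cp d])
  have leg: "local_expr g y = rr (conjc (m4 * t1 + - m2 * t3) (m4 * t2 + - m2 * t4) (- m3 * t1 + m1 * t3) (- m3 * t2 + m1 * t4) c)"
    unfolding g T(3) rr_comp ..
  define X1 where "X1 = fst (hom x)"
  define X2 where "X2 = snd (hom x)"
  have hx: "hom x = (X1, X2)" by (simp add: X1_def X2_def)
  have Xnz: "(X1, X2) \<noteq> (0, 0)" using hom_nz[of x] hx by simp
  have Mnz: "(m1 * X1 + m2 * X2, m3 * X1 + m4 * X2) \<noteq> (0, 0)" by (rule det_nz_vec[OF d Xnz])
  have "y = proj (m1 * X1 + m2 * X2) (m3 * X1 + m4 * X2)" by (simp add: y_def mobius_def hx)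
  then obtain \<kappa> where \<kappa>: "\<kappa> \<noteq> 0" "hom y = (\<kappa> * (m1 * X1 + m2 * X2), \<kappa> * (m3 * X1 + m4 * X2))"
    using hom_proj[OF Mnz] by metis
  define w1 where "w1 = chart_pt y"
  define w2 where "w2 = chart_pt x"
  have ty: "t1 * w1 + t2 = \<kappa> * (m1 * X1 + m2 * X2)" "t3 * w1 + t4 = \<kappa> * (m3 * X1 + m4 * X2)"
    using T(2) \<kappa>(2) unfolding w1_def by auto
  have sx: "s1 * w2 + s2 = X1" "s3 * w2 + s4 = X2" using S(2) hx unfolding w2_def by auto
  have dS1: "(m4 * t1 + - m2 * t3) * (- m3 * t2 + m1 * t4) - (m4 * t2 + - m2 * t4) * (- m3 * t1 + m1 * t3) \<noteq> 0"
  proof -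
    have "(m4 * t1 + - m2 * t3) * (- m3 * t2 + m1 * t4) - (m4 * t2 + - m2 * t4) * (- m3 * t1 + m1 * t3)
       = (m1 * m4 - m2 * m3) * (t1 * t4 - t2 * t3)" by (simp add: algebra_simps)
    then show ?thesis using d T(1) by simp
  qed
  have kk: "\<kappa> * (m1 * m4 - m2 * m3) \<noteq> 0" using \<kappa>(1) d by simp
  have e1: "(m4 * t1 + - m2 * t3) * w1 + (m4 * t2 + - m2 * t4) = (\<kappa> * (m1 * m4 - m2 * m3)) * (s1 * w2 + s2)"
  proof -
    have "(m4 * t1 + - m2 * t3) * w1 + (m4 * t2 + - m2 * t4) = m4 * (t1 * w1 + t2) - m2 * (t3 * w1 + t4)"
      by (simp add: algebra_simps)
    also have "\<dots> = (\<kappa> * (m1 * m4 - m2 * m3)) * (s1 * w2 + s2)" unfolding ty sx by (simp add: algebra_simps)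
    finally show ?thesis .
  qed
  have e2: "(- m3 * t1 + m1 * t3) * w1 + (- m3 * t2 + m1 * t4) = (\<kappa> * (m1 * m4 - m2 * m3)) * (s3 * w2 + s4)"
  proof -
    have "(- m3 * t1 + m1 * t3) * w1 + (- m3 * t2 + m1 * t4) = m1 * (t3 * w1 + t4) - m3 * (t1 * w1 + t2)"
      by (simp add: algebra_simps)
    also have "\<dots> = (\<kappa> * (m1 * m4 - m2 * m3)) * (s3 * w2 + s4)" unfolding ty sx by (simp add: algebra_simps)
    finally show ?thesis .
  qed
  have fx': "ratmap c (proj (s1 * w2 + s2) (s3 * w2 + s4)) = proj (s1 * w2 + s2) (s3 * w2 + s4)"
    unfolding sx X1_def X2_def proj_hom using fx by simp
  note ci = CI[OF cp dS1 S(1) kk e1 e2 fx']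
  show ?thesis
    unfolding multiplier_def fix_multiplicity_def y_def[symmetric] leg S(3)
    using ci unfolding w1_def w2_def by simp
qed

lemma fix_multipliers_conj:
  assumes cp: "coprime_forms c" and d: "m1 * m4 - m2 * m3 \<noteq> 0"
  shows "fix_multipliers (mobius m1 m2 m3 m4 \<circ> ratmap c \<circ> mobius m4 (-m2) (-m3) m1) = fix_multipliers (ratmap c)"
proof -
  define g where "g = mobius m1 m2 m3 m4 \<circ> ratmap c \<circ> mobius m4 (-m2) (-m3) m1"
  define M where "M = mobius m1 m2 m3 m4"
  have fixset: "{q. g q = q} = M ` {p. ratmap c p = p}"
  proof (intro set_eqI iffI)
    fix q assume "q \<in> {q. g q = q}"
    then have "mobius m4 (-m2) (-m3) m1 (g q) = mobius m4 (-m2) (-m3) m1 q" by simp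
    then have "ratmap c (mobius m4 (-m2) (-m3) m1 q) = mobius m4 (-m2) (-m3) m1 q"
      unfolding g_def using mobius_adj2[OF d] by simp
    moreover have "q = M (mobius m4 (-m2) (-m3) m1 q)" unfolding M_def using mobius_adj1[OF d] by simp
    ultimately show "q \<in> M ` {p. ratmap c p = p}" by blast
  next
    fix q assume "q \<in> M ` {p. ratmap c p = p}"
    then obtain p where "q = M p" "ratmap c p = p" by blast
    then show "q \<in> {q. g q = q}" unfolding g_def M_def using mobius_adj2[OF d] by simp
  qed
  have inj: "inj_on M {p. ratmap c p = p}"
    by (rule inj_on_inverseI[where g="mobius m4 (-m2) (-m3) m1"]) (simp add: M_def mobius_adj2[OF d])
  have "fix_multipliers g = (\<Sum>q\<in>M ` {p. ratmap c p = p}. replicate_mset (fix_multiplicity g q) (multiplier g q))"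
    unfolding fix_multipliers_def fixset ..
  also have "\<dots> = (\<Sum>p\<in>{p. ratmap c p = p}. replicate_mset (fix_multiplicity g (M p)) (multiplier g (M p)))"
    by (simp add: sum.reindex[OF inj])
  also have "\<dots> = (\<Sum>p\<in>{p. ratmap c p = p}. replicate_mset (fix_multiplicity (ratmap c) p) (multiplier (ratmap c) p))"
    by (rule sum.cong) (use PI[OF cp d] in \<open>auto simp: g_def M_def\<close>)
  finally show ?thesis unfolding g_def fix_multipliers_def .
qed

lemma hol_conj_fix_multipliers:
  assumes cp: "coprime_forms c" and h: "hol_conj (ratmap c) g"
  shows "fix_multipliers g = fix_multipliers (ratmap c)"
proof -
  from h obtain m1 m2 m3 m4 where d: "m1 * m4 - m2 * m3 \<noteq> 0"
    and g: "g = mobius m1 m2 m3 m4 \<circ> ratmap c \<circ> mobius m4 (-m2) (-m3) m1"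
    unfolding hol_conj_alt by blast
  show ?thesis unfolding g by (rule fix_multipliers_conj[OF cp d])
qed

lemma mult_Some:
  assumes "formG c z 1 \<noteq> 0" "formF c z 1 = z * formG c z 1"
  shows "multiplier (ratmap c) (Some z) = (Fx c z 1 + Gy c z 1) / formG c z 1 - 2"
  unfolding multiplier_def local_Some chart_pt_def using deriv_fixed[OF assms] by simp

lemma mult_None:
  assumes "c = (a0,a1,a2,0,b1,b2)" "a0 \<noteq> 0"
  shows "multiplier (ratmap c) None = b1 / a0"
proof -
  define c' where "c' = conjc 0 1 1 0 c"
  have G: "formG c' 0 1 = - a0" by (simp add: c'_def formG_conjc assms formF_def)
  have F: "formF c' 0 1 = 0 * formG c' 0 1" by (simp add: c'_def formF_conjc assms formG_def)
  have Gnz: "formG c' 0 1 \<noteq> 0" using G assms by simp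
  have tr: "Fx c' 0 1 + Gy c' 0 1 = - (2 * a0 + b1)"
    unfolding c'_def trace_conjc by (simp add: assms Fx_def Gy_def)
  have "multiplier (ratmap c) None = deriv (rr c') 0"
    unfolding multiplier_def local_None chart_pt_def c'_def rr_conjc_J by simp
  also have "\<dots> = (- (2 * a0 + b1)) / (- a0) - 2" unfolding deriv_fixed[OF Gnz F] tr G ..
  also have "\<dots> = b1 / a0" using assms(2) by (simp add: field_simps)
  finally show ?thesis .
qed

lemma holo_UNIV_on: "h holomorphic_on UNIV \<Longrightarrow> h holomorphic_on S"
  using holomorphic_on_subset by blast

lemma multiplicity_Some:
  assumes "formG c z 1 \<noteq> 0" "h holomorphic_on UNIV" "h z \<noteq> 0" "\<And>w. Phi c w 1 = (w - z)^n * h w"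
  shows "fix_multiplicity (ratmap c) (Some z) = n"
proof -
  have "zorder (\<lambda>w. rr c w - w) z = int n"
    by (rule zorder_rr[OF open_formG_nz, where h=h]) (use assms in \<open>auto intro: holo_UNIV_on\<close>)
  then show ?thesis unfolding fix_multiplicity_def local_Some chart_pt_def by simp
qed

lemma multiplicity_None:
  assumes "formF c 1 0 \<noteq> 0" "h holomorphic_on UNIV" "h 0 \<noteq> 0" "\<And>w. Phi c 1 w = w^n * h w"
  shows "fix_multiplicity (ratmap c) None = n"
proof -
  define c' where "c' = conjc 0 1 1 0 c"
  have G: "formG c' w 1 = - formF c 1 w" for w by (simp add: c'_def formG_conjc)
  have P: "Phi c' w 1 = (w - 0)^n * h w" for w by (simp add: c'_def Phi_conjc assms(4))
  have "zorder (\<lambda>w. rr c' w - w) 0 = int n"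
    by (rule zorder_rr[OF open_formG_nz[of c'], where h=h]) (use assms in \<open>auto intro: holo_UNIV_on simp: G P\<close>)
  then show ?thesis unfolding fix_multiplicity_def local_None chart_pt_def c'_def rr_conjc_J by simp
qed

definition cN :: "complex \<Rightarrow> complex \<Rightarrow> coeffs2" where "cN a b = (1, a, 0, 0, b, 1)"
definition cT :: coeffs2 where "cT = (1, 0, 1, 0, 1, 0)"
definition mu3 :: "complex \<Rightarrow> complex \<Rightarrow> complex" where "mu3 a b = (2 - a - b) / (1 - a * b)"

lemma coprime_cN: "a * b \<noteq> 1 \<Longrightarrow> coprime_forms (cN a b)"
  unfolding coprime_forms_def
proof (intro allI impI notI)
  fix X Y assume ab: "a * b \<noteq> 1" and nz: "(X, Y) \<noteq> (0, 0)" and z: "formF (cN a b) X Y = 0 \<and> formG (cN a b) X Y = 0"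
  from z have f: "X * (X + a * Y) = 0" and g: "Y * (b * X + Y) = 0"
    by (auto simp: cN_def formF_def formG_def power2_eq_square algebra_simps)
  show False
  proof (cases "X = 0")
    case True then show False using g nz by simp
  next
    case False
    with f have s: "X + a * Y = 0" by simp
    have x: "X = - a * Y"
    proof -
      have "X = (X + a * Y) - a * Y" by simp
      also have "\<dots> = - a * Y" using s by simp
      finally show ?thesis .
    qed
    then have "Y \<noteq> 0" using False by auto
    with g have "b * X + Y = 0" by simp
    with x have "Y * (1 - a * b) = 0" by (simp add: algebra_simps)
    with \<open>Y \<noteq> 0\<close> ab show False by simp
  qed
qed

lemma coprime_cN_imp: "coprime_forms (cN a b) \<Longrightarrow> a * b \<noteq> 1"
proof
  assume cp: "coprime_forms (cN a b)" and ab: "a * b = 1"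
  have "formF (cN a b) (-a) 1 = 0" "formG (cN a b) (-a) 1 = 0"
    using ab by (simp_all add: cN_def formF_def formG_def power2_eq_square algebra_simps)
  moreover have "(-a, 1::complex) \<noteq> (0, 0)" by simp
  ultimately show False using cp unfolding coprime_forms_def by blast
qed

lemma coprime_cT: "coprime_forms cT"
  unfolding coprime_forms_def
proof (intro allI impI notI)
  fix X Y :: complex assume nz: "(X, Y) \<noteq> (0, 0)" and z: "formF cT X Y = 0 \<and> formG cT X Y = 0"
  then have "X * Y = 0" "X^2 + Y^2 = 0" by (auto simp: cT_def formF_def formG_def)
  then show False using nz by auto
qed

lemma fixset_cN:
  assumes ab: "a * b \<noteq> 1"
  shows "{p. ratmap (cN a b) p = p} = {Some 0, None} \<union> (if b = 1 then {} else {Some ((1 - a) / (1 - b))})"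
proof (intro set_eqI iffI)
  fix p assume "p \<in> {p. ratmap (cN a b) p = p}"
  then have fx: "ratmap (cN a b) p = p" by simp
  show "p \<in> {Some 0, None} \<union> (if b = 1 then {} else {Some ((1 - a) / (1 - b))})"
  proof (cases p)
    case None then show ?thesis by simp
  next
    case (Some z)
    with fx have "proj (z^2 + a * z) (b * z + 1) = Some z"
      by (simp add: ratmap_def hom_Some cN_def formF_def formG_def)
    from proj_eq_Some[OF this] have "z^2 + a * z = z * (b * z + 1)" by simp
    then have "z * (z * (1 - b) - (1 - a)) = 0" by (simp add: power2_eq_square algebra_simps)
    then have "z = 0 \<or> z * (1 - b) = 1 - a" by simp
    then show ?thesis
    proof
      assume "z = 0" then show ?thesis using Some by simp
    next
      assume e: "z * (1 - b) = 1 - a"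
      show ?thesis
      proof (cases "b = 1")
        case True then have "a = 1" using e by simp
        with True ab show ?thesis by simp
      next
        case False then have "z = (1 - a) / (1 - b)" using e by (simp add: field_simps)
        with Some False show ?thesis by simp
      qed
    qed
  qed
next
  fix p assume p: "p \<in> {Some 0, None} \<union> (if b = 1 then {} else {Some ((1 - a) / (1 - b))})"
  show "p \<in> {p. ratmap (cN a b) p = p}"
  proof (cases "p = Some 0 \<or> p = None")
    case True then show ?thesis
      by (auto simp: ratmap_def hom_Some hom_None cN_def formF_def formG_def proj_def)
  next
    case False
    with p have b: "b \<noteq> 1" and pz: "p = Some ((1 - a) / (1 - b))" by (auto split: if_splits)
    define z where "z = (1 - a) / (1 - b)"
    have e: "z * (1 - b) = 1 - a" using b by (simp add: z_def)
    have "b * z + 1 = (1 - a * b) / (1 - b)" using b by (simp add: z_def field_simps)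
    then have d: "b * z + 1 \<noteq> 0" using ab b by simp
    have "z^2 + a * z = z * (b * z + 1)"
    proof -
      have "z^2 + a * z - z * (b * z + 1) = z * (z * (1 - b) - (1 - a))" by (simp add: power2_eq_square algebra_simps)
      then show ?thesis using e by simp
    qed
    then have "ratmap (cN a b) (Some z) = Some z"
      using d by (simp add: ratmap_def hom_Some cN_def formF_def formG_def proj_def)
    then show ?thesis using pz z_def by simp
  qed
qed


lemma cN_F: "formF (cN a b) x y = x^2 + a * x * y" and cN_G: "formG (cN a b) x y = b * x * y + y^2"
  by (simp_all add: cN_def formF_def formG_def)

lemma cN_Phi1: "Phi (cN a b) w 1 = (1 - b) * w^2 + (a - 1) * w"
  by (simp add: Phi_def cN_F cN_G power2_eq_square algebra_simps)
lemma cN_Phi2: "Phi (cN a b) 1 w = (a - 1) * w^2 + (1 - b) * w"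
  by (simp add: Phi_def cN_F cN_G power2_eq_square algebra_simps)

lemma fm_cN:
  assumes ab: "a * b \<noteq> 1"
  shows "fix_multipliers (ratmap (cN a b)) = {#a, b, mu3 a b#}"
proof -
  have m0: "multiplier (ratmap (cN a b)) (Some 0) = a"
    by (subst mult_Some) (simp_all add: cN_F cN_G, simp add: cN_def Fx_def Gy_def)
  have mI: "multiplier (ratmap (cN a b)) None = b"
    by (rule mult_None[of _ 1 a 0 b 1, simplified]) (simp add: cN_def)
  have F10: "formF (cN a b) 1 0 \<noteq> 0" by (simp add: cN_F)
  have G01: "formG (cN a b) 0 1 \<noteq> 0" by (simp add: cN_G)
  show ?thesis
  proof (cases "b = 1")
    case b: True
    then have a: "a \<noteq> 1" using ab by auto
    have fs: "{p. ratmap (cN a b) p = p} = {Some 0, None}" using fixset_cN[OF ab] b by simp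
    have k0: "fix_multiplicity (ratmap (cN a b)) (Some 0) = 1"
      by (rule multiplicity_Some[OF G01, where h="\<lambda>w. (1 - b) * w + (a - 1)"])
         (use a in \<open>auto intro!: holomorphic_intros simp: cN_Phi1 power2_eq_square algebra_simps\<close>)
    have kI: "fix_multiplicity (ratmap (cN a b)) None = 2"
      by (rule multiplicity_None[OF F10, where h="\<lambda>w. a - 1"])
         (use a b in \<open>auto intro!: holomorphic_intros simp: cN_Phi2\<close>)
    have mu: "mu3 a b = 1" using a b by (simp add: mu3_def field_simps)
    show ?thesis unfolding fix_multipliers_def fs using m0 mI k0 kI mu b
      by (simp add: numeral_2_eq_2)
  next
    case b: False
    define z where "z = (1 - a) / (1 - b)"
    have ez: "z * (1 - b) = 1 - a" using b by (simp add: z_def)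
    have Gz: "b * z + 1 = (1 - a * b) / (1 - b)" using b by (simp add: z_def field_simps)
    then have Gz': "formG (cN a b) z 1 \<noteq> 0" using ab b by (simp add: cN_G)
    have Fz: "formF (cN a b) z 1 = z * formG (cN a b) z 1"
    proof -
      have "z^2 + a * z - z * (b * z + 1) = z * (z * (1 - b) - (1 - a))" by (simp add: power2_eq_square algebra_simps)
      then show ?thesis using ez by (simp add: cN_F cN_G)
    qed
    have mz: "multiplier (ratmap (cN a b)) (Some z) = mu3 a b"
    proof -
      have "multiplier (ratmap (cN a b)) (Some z) = ((2 + b) * z + a + 2) / (b * z + 1) - 2"
        unfolding mult_Some[OF Gz' Fz] by (simp add: cN_def Fx_def Gy_def formG_def algebra_simps)
      also have "\<dots> = ((2 - b) * z + a) / (b * z + 1)"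
      proof -
        have nz: "b * z + 1 \<noteq> 0" using Gz' by (simp add: cN_G)
        have "((2 + b) * z + a + 2) = ((2 - b) * z + a) + 2 * (b * z + 1)" by (simp add: algebra_simps)
        then have "((2 + b) * z + a + 2) / (b * z + 1) = ((2 - b) * z + a) / (b * z + 1) + 2 * (b * z + 1) / (b * z + 1)"
          by (simp only: add_divide_distrib)
        also have "2 * (b * z + 1) / (b * z + 1) = 2" by (rule nonzero_mult_div_cancel_right[OF nz])
        finally show ?thesis by simp
      qed
      also have "(2 - b) * z + a = (2 - a - b) / (1 - b)"
        using b by (simp add: z_def field_simps)
      also have "((2 - a - b) / (1 - b)) / (b * z + 1) = mu3 a b"
        unfolding Gz mu3_def using b by simp
      finally show ?thesis .
    qed
    have kI: "fix_multiplicity (ratmap (cN a b)) None = 1"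
      by (rule multiplicity_None[OF F10, where h="\<lambda>w. (a - 1) * w + (1 - b)"])
         (use b in \<open>auto intro!: holomorphic_intros simp: cN_Phi2 power2_eq_square algebra_simps\<close>)
    show ?thesis
    proof (cases "a = 1")
      case a: True
      then have z0: "z = 0" by (simp add: z_def)
      have fs: "{p. ratmap (cN a b) p = p} = {Some 0, None}" using fixset_cN[OF ab] b z0 z_def by auto
      have k0: "fix_multiplicity (ratmap (cN a b)) (Some 0) = 2"
        by (rule multiplicity_Some[OF G01, where h="\<lambda>w. 1 - b"])
           (use a b in \<open>auto intro!: holomorphic_intros simp: cN_Phi1\<close>)
      have mu: "mu3 a b = 1" using a b by (simp add: mu3_def field_simps)
      show ?thesis unfolding fix_multipliers_def fs using m0 mI k0 kI mu a
        by (simp add: numeral_2_eq_2)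
    next
      case a: False
      have z0: "z \<noteq> 0" using a b by (simp add: z_def)
      have fs: "{p. ratmap (cN a b) p = p} = {Some 0, None, Some z}" using fixset_cN[OF ab] b z_def by auto
      have k0: "fix_multiplicity (ratmap (cN a b)) (Some 0) = 1"
        by (rule multiplicity_Some[OF G01, where h="\<lambda>w. (1 - b) * w + (a - 1)"])
           (use a in \<open>auto intro!: holomorphic_intros simp: cN_Phi1 power2_eq_square algebra_simps\<close>)
      have kz: "fix_multiplicity (ratmap (cN a b)) (Some z) = 1"
      proof (rule multiplicity_Some[OF Gz', where h="\<lambda>w. (1 - b) * w"])
        show "(\<lambda>w. (1 - b) * w) holomorphic_on UNIV" by (intro holomorphic_intros)
        show "(1 - b) * z \<noteq> 0" using b z0 by simp
        fix w show "Phi (cN a b) w 1 = (w - z)^1 * ((1 - b) * w)"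
        proof -
          have "(w - z)^1 * ((1 - b) * w) = (1 - b) * w^2 - w * (z * (1 - b))" by (simp add: power2_eq_square algebra_simps)
          also have "\<dots> = (1 - b) * w^2 + (a - 1) * w" unfolding ez by (simp add: algebra_simps)
          finally show ?thesis unfolding cN_Phi1 by simp
        qed
      qed
      show ?thesis unfolding fix_multipliers_def fs using m0 mI k0 kI kz z0 mz
        by (simp add: add_mset_commute)
    qed
  qed
qed

lemma fm_cT: "fix_multipliers (ratmap cT) = {#1, 1, 1#}"
proof -
  have fs: "{p. ratmap cT p = p} = {None}"
  proof (intro set_eqI iffI)
    fix p assume "p \<in> {p. ratmap cT p = p}"
    then have fx: "ratmap cT p = p" by simp
    show "p \<in> {None}"
    proof (cases p)
      case (Some z)
      with fx have "proj (z^2 + 1) z = Some z" by (simp add: ratmap_def hom_Some cT_def formF_def formG_def)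
      from proj_eq_Some[OF this] have "z^2 + 1 = z * z" by simp
      then show ?thesis by (simp add: power2_eq_square)
    qed simp
  next
    fix p :: sphere assume "p \<in> {None}"
    then show "p \<in> {p. ratmap cT p = p}" by (simp add: ratmap_def hom_None cT_def formF_def formG_def proj_def)
  qed
  have mI: "multiplier (ratmap cT) None = 1"
    by (rule mult_None[of _ 1 0 1 1 0, simplified]) (simp add: cT_def)
  have kI: "fix_multiplicity (ratmap cT) None = 3"
    by (rule multiplicity_None[where h="\<lambda>w. 1"])
       (auto simp: cT_def formF_def formG_def Phi_def power2_eq_square power3_eq_cube algebra_simps)
  show ?thesis unfolding fix_multipliers_def fs using mI kI by (simp add: numeral_3_eq_3)
qed

lemma coprime_scale: "k \<noteq> 0 \<Longrightarrow> (\<And>x y. formF c' x y = k * formF c x y) \<Longrightarrow>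
   (\<And>x y. formG c' x y = k * formG c x y) \<Longrightarrow> coprime_forms c' \<Longrightarrow> coprime_forms c"
  unfolding coprime_forms_def by auto

lemma coprime_a0: "coprime_forms (a0,a1,a2,0,b1,b2) \<Longrightarrow> a0 \<noteq> 0"
proof
  assume cp: "coprime_forms (a0,a1,a2,0,b1,b2)" and "a0 = 0"
  then have "formF (a0,a1,a2,0,b1,b2) 1 0 = 0" "formG (a0,a1,a2,0,b1,b2) 1 0 = 0"
    by (simp_all add: formF_def formG_def)
  moreover have "(1::complex, 0::complex) \<noteq> (0, 0)" by simp
  ultimately show False using cp unfolding coprime_forms_def by blast
qed

lemma caseA:
  assumes cp: "coprime_forms (a0,a1,a2,0,b1,b2)" and t: "(a0 - b1) * t^2 + (a1 - b2) * t + a2 = 0"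
  shows "hol_conj (ratmap (a0,a1,a2,0,b1,b2)) (ratmap (cN ((2 * a0 * t + a1 - b1 * t) / (b1 * t + b2)) (b1 / a0)))
     \<and> ((2 * a0 * t + a1 - b1 * t) / (b1 * t + b2)) * (b1 / a0) \<noteq> 1"
proof -
  define c where "c = (a0,a1,a2,0::complex,b1,b2)"
  define d where "d = b1 * t + b2"
  define e where "e = 2 * a0 * t + a1 - b1 * t"
  have a0: "a0 \<noteq> 0" by (rule coprime_a0[OF cp])
  have dnz: "d \<noteq> 0"
  proof
    assume d0: "d = 0"
    have "formG c t 1 = 0" using d0 by (simp add: c_def formG_def d_def)
    moreover have "formF c t 1 = 0"
    proof -
      have "formF c t 1 = ((a0 - b1) * t^2 + (a1 - b2) * t + a2) + t * d"
        by (simp add: c_def formF_def d_def power2_eq_square algebra_simps)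
      then show ?thesis using t d0 by simp
    qed
    moreover have "(t, 1::complex) \<noteq> (0, 0)" by simp
    ultimately show False using cp unfolding coprime_forms_def c_def by blast
  qed
  define l where "l = d / a0"
  have lnz: "l \<noteq> 0" using dnz a0 by (simp add: l_def)
  have la: "a0 * l = d" using a0 by (simp add: l_def)
  have kF: "formF (conjc l t 0 1 c) x y = (l * d) * formF (cN (e / d) (b1 / a0)) x y" for x y
  proof -
    have "formF (conjc l t 0 1 c) x y = a0 * l^2 * x^2 + l * e * x * y + ((a0 - b1) * t^2 + (a1 - b2) * t + a2) * y^2"
      unfolding formF_conjc formG_conjc by (simp add: c_def formF_def formG_def e_def power2_eq_square algebra_simps)
    also have "\<dots> = (l * d) * formF (cN (e / d) (b1 / a0)) x y"
      unfolding t cN_F using dnz la[symmetric] by (simp add: power2_eq_square algebra_simps)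
    finally show ?thesis .
  qed
  have kG: "formG (conjc l t 0 1 c) x y = (l * d) * formG (cN (e / d) (b1 / a0)) x y" for x y
  proof -
    have "formG (conjc l t 0 1 c) x y = l * (b1 * l * x * y + d * y^2)"
      unfolding formF_conjc formG_conjc by (simp add: c_def formF_def formG_def d_def power2_eq_square algebra_simps)
    also have "\<dots> = (l * d) * formG (cN (e / d) (b1 / a0)) x y"
      unfolding cN_G using dnz a0 by (simp add: l_def power2_eq_square field_simps)
    finally show ?thesis .
  qed
  have ld: "l * d \<noteq> 0" using lnz dnz by simp
  have det: "l * 1 - t * 0 \<noteq> 0" using lnz by simp
  have cpc: "coprime_forms c" using cp c_def by simp
  have "coprime_forms (cN (e / d) (b1 / a0))"
    by (rule coprime_scale[OF ld kF kG coprime_conjc[OF cpc det]])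
  then have prod: "(e / d) * (b1 / a0) \<noteq> 1" by (rule coprime_cN_imp)
  have "hol_conj (ratmap c) (ratmap (conjc l t 0 1 c))" by (rule hol_conj_ratmap_conjc[OF cpc det])
  also have "ratmap (conjc l t 0 1 c) = ratmap (cN (e / d) (b1 / a0))" by (rule ratmap_scale[OF ld kF kG])
  finally show ?thesis using prod unfolding c_def d_def e_def by simp
qed

lemma caseB:
  assumes cp: "coprime_forms (a0,a1,a2,0,a0,a1)"
  shows "hol_conj (ratmap (a0,a1,a2,0,a0,a1)) (ratmap cT)"
proof -
  define c where "c = (a0,a1,a2,0::complex,a0,a1)"
  have a0: "a0 \<noteq> 0" by (rule coprime_a0[OF cp])
  have a2: "a2 \<noteq> 0"
  proof
    assume a20: "a2 = 0"
    have "formF c (-a1) a0 = 0" "formG c (-a1) a0 = 0"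
      using a20 by (simp_all add: c_def formF_def formG_def power2_eq_square algebra_simps)
    moreover have "(-a1, a0) \<noteq> (0, 0)" using a0 by simp
    ultimately show False using cp unfolding coprime_forms_def c_def by blast
  qed
  define l where "l = csqrt (a2 / a0)"
  define s where "s = - a1 / a0"
  have l2: "l^2 = a2 / a0" by (simp add: l_def)
  have lnz: "l \<noteq> 0" using l2 a0 a2 by auto
  have l2': "a0 * l^2 = a2" using l2 a0 by simp
  have as: "a0 * s = - a1" using a0 by (simp add: s_def)
  have kF: "formF (conjc l s 0 1 c) x y = a2 * formF cT x y" for x y
  proof -
    have "formF (conjc l s 0 1 c) x y = (a0 * l^2) * x^2 + l * (a0 * s + a1) * x * y + a2 * y^2"
      unfolding formF_conjc formG_conjc by (simp add: c_def formF_def formG_def power2_eq_square algebra_simps)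
    also have "\<dots> = a2 * formF cT x y" unfolding as l2' by (simp add: cT_def formF_def algebra_simps)
    finally show ?thesis .
  qed
  have kG: "formG (conjc l s 0 1 c) x y = a2 * formG cT x y" for x y
  proof -
    have "formG (conjc l s 0 1 c) x y = l * (a0 * l * x * y + (a0 * s + a1) * y^2)"
      unfolding formF_conjc formG_conjc by (simp add: c_def formF_def formG_def power2_eq_square algebra_simps)
    also have "\<dots> = (a0 * l^2) * x * y" unfolding as by (simp add: power2_eq_square algebra_simps)
    also have "\<dots> = a2 * formG cT x y" unfolding l2' by (simp add: cT_def formG_def)
    finally show ?thesis .
  qed
  have det: "l * 1 - s * 0 \<noteq> 0" using lnz by simp
  have cpc: "coprime_forms c" using cp c_def by simp
  have "hol_conj (ratmap c) (ratmap (conjc l s 0 1 c))" by (rule hol_conj_ratmap_conjc[OF cpc det])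
  also have "ratmap (conjc l s 0 1 c) = ratmap cT" by (rule ratmap_scale[OF a2 kF kG])
  finally show ?thesis unfolding c_def .
qed


lemma step1: "coprime_forms c \<Longrightarrow> \<exists>p q r s. p * s - q * r \<noteq> 0 \<and> formG (conjc p q r s c) 1 0 = 0"
proof -
  assume cp: "coprime_forms c"
  obtain a0 a1 a2 b0 b1 b2 where c: "c = (a0,a1,a2,b0,b1,b2)" by (cases c) auto
  show ?thesis
  proof (cases "b0 = 0")
    case True
    then show ?thesis
      by (intro exI[of _ 1] exI[of _ 0] exI[of _ 0] exI[of _ 1]) (unfold formG_conjc, simp add: c formG_def)
  next
    case False
    have "\<not> (\<exists>a l. a \<noteq> 0 \<and> l = 0 \<and> Phipoly c = pCons a l)"
      using False by (auto simp: Phipoly_def c)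
    then obtain t where t: "poly (Phipoly c) t = 0" using fundamental_theorem_of_algebra_alt by blast
    have "formG (conjc t 1 1 0 c) 1 0 = - Phi c t 1" by (simp add: formG_conjc Phi_def algebra_simps)
    then show ?thesis using t unfolding poly_Phipoly
      by (intro exI[of _ t] exI[of _ 1] exI[of _ 1] exI[of _ 0]) simp
  qed
qed

lemma reduce:
  assumes cp: "coprime_forms c"
  shows "(\<exists>a b. a * b \<noteq> 1 \<and> hol_conj (ratmap c) (ratmap (cN a b))) \<or> hol_conj (ratmap c) (ratmap cT)"
proof -
  obtain p q r s where d: "p * s - q * r \<noteq> 0" and g0: "formG (conjc p q r s c) 1 0 = 0"
    using step1[OF cp] by blast
  define c1 where "c1 = conjc p q r s c"
  have h1: "hol_conj (ratmap c) (ratmap c1)" unfolding c1_def by (rule hol_conj_ratmap_conjc[OF cp d])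
  have cp1: "coprime_forms c1" unfolding c1_def by (rule coprime_conjc[OF cp d])
  obtain a0 a1 a2 b0 b1 b2 where c1: "c1 = (a0,a1,a2,b0,b1,b2)" by (cases c1) auto
  have b0: "b0 = 0" using g0 by (simp add: c1_def[symmetric] c1 formG_def)
  have cp1': "coprime_forms (a0,a1,a2,0,b1,b2)" using cp1 c1 b0 by simp
  have h1': "hol_conj (ratmap c) (ratmap (a0,a1,a2,0,b1,b2))" using h1 c1 b0 by simp
  have A: ?thesis if t: "(a0 - b1) * t^2 + (a1 - b2) * t + a2 = 0" for t
  proof -
    from caseA[OF cp1' t] show ?thesis using hol_conj_trans[OF h1'] by blast
  qed
  show ?thesis
  proof (cases "a0 = b1 \<and> a1 = b2")
    case True
    show ?thesis
    proof (cases "a2 = 0")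
      case True
      then show ?thesis using A[of 0] by simp
    next
      case False
      have "coprime_forms (a0,a1,a2,0,a0,a1)" using cp1' \<open>a0 = b1 \<and> a1 = b2\<close> by simp
      from caseB[OF this] have "hol_conj (ratmap (a0,a1,a2,0,b1,b2)) (ratmap cT)"
        using \<open>a0 = b1 \<and> a1 = b2\<close> by simp
      then show ?thesis using hol_conj_trans[OF h1'] by blast
    qed
  next
    case False
    have "\<not> (\<exists>a l. a \<noteq> 0 \<and> l = 0 \<and> [:a2, a1 - b2, a0 - b1:] = pCons a l)"
      using False by auto
    then obtain t where "poly [:a2, a1 - b2, a0 - b1:] t = 0" using fundamental_theorem_of_algebra_alt by blast
    then have "(a0 - b1) * t^2 + (a1 - b2) * t + a2 = 0" by (simp add: power2_eq_square algebra_simps)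
    then show ?thesis by (rule A)
  qed
qed


lemma proj_eq_None: "proj u v = None \<longleftrightarrow> v = 0"
  by (simp add: proj_def)

lemma Gen:
  assumes cp: "coprime_forms c" and xy: "x \<noteq> y" and fx: "ratmap c x = x" and fy: "ratmap c y = y"
  shows "hol_conj (ratmap c) (ratmap (cN (multiplier (ratmap c) x) (multiplier (ratmap c) y)))"
proof -
  obtain P1 P2 where hx: "hom x = (P1, P2)" by (cases "hom x")
  obtain Q1 Q2 where hy: "hom y = (Q1, Q2)" by (cases "hom y")
  have d: "Q1 * P2 - P1 * Q2 \<noteq> 0"
    using xy hx hy by (cases x; cases y) (auto simp: hom_def)
  have Tx: "mobius Q1 P1 Q2 P2 (Some 0) = x"
    using proj_hom[of x] hx by (simp add: mobius_def hom_Some)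
  have Ty: "mobius Q1 P1 Q2 P2 None = y"
    using proj_hom[of y] hy by (simp add: mobius_def hom_None)
  define c' where "c' = conjc Q1 P1 Q2 P2 c"
  have cp': "coprime_forms c'" unfolding c'_def by (rule coprime_conjc[OF cp d])
  have rc: "ratmap c' z = mobius P2 (-P1) (-Q2) Q1 (ratmap c (mobius Q1 P1 Q2 P2 z))" for z
    unfolding c'_def by (rule ratmap_conjc[OF cp d])
  have Mx: "mobius P2 (-P1) (-Q2) Q1 x = Some 0" using mobius_adj2[OF d, of "Some 0"] Tx by simp
  have My: "mobius P2 (-P1) (-Q2) Q1 y = None" using mobius_adj2[OF d, of None] Ty by simp
  have f0: "ratmap c' (Some 0) = Some 0" unfolding rc Tx fx Mx ..
  have fI: "ratmap c' None = None" unfolding rc Ty fy My ..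
  obtain a0 a1 a2 b0 b1 b2 where c': "c' = (a0,a1,a2,b0,b1,b2)" by (cases c') auto
  have b0: "b0 = 0" using fI by (simp add: ratmap_def hom_None c' formF_def formG_def proj_eq_None)
  have "proj a2 b2 = Some 0" using f0 by (simp add: ratmap_def hom_Some c' formF_def formG_def)
  from proj_eq_Some[OF this] have b2: "b2 \<noteq> 0" and a2: "a2 = 0" by auto
  have cpA: "coprime_forms (a0,a1,a2,0,b1,b2)" using cp' c' b0 by simp
  have a0: "a0 \<noteq> 0" by (rule coprime_a0[OF cpA])
  from caseA[OF cpA, of 0] a2 have hA: "hol_conj (ratmap c') (ratmap (cN (a1 / b2) (b1 / a0)))"
    using c' b0 by simp
  have m0: "multiplier (ratmap c') (Some 0) = a1 / b2"
  proof -
    have G: "formG c' 0 1 \<noteq> 0" using b2 by (simp add: c' formG_def)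
    have F: "formF c' 0 1 = 0 * formG c' 0 1" using a2 by (simp add: c' formF_def)
    have "multiplier (ratmap c') (Some 0) = (a1 + 2 * b2) / b2 - 2"
      unfolding mult_Some[OF G F] by (simp add: c' Fx_def Gy_def formG_def)
    also have "\<dots> = a1 / b2" using b2 by (simp add: field_simps)
    finally show ?thesis .
  qed
  have mI: "multiplier (ratmap c') None = b1 / a0" by (rule mult_None[OF _ a0]) (simp add: c' b0)
  have d2: "P2 * Q1 - (-P1) * (-Q2) \<noteq> 0" using d by (simp add: algebra_simps)
  have g: "mobius P2 (-P1) (-Q2) Q1 \<circ> ratmap c \<circ> mobius Q1 (- (- P1)) (- (- Q2)) P2 = ratmap c'"
    by (simp add: fun_eq_iff rc)
  have px: "multiplier (ratmap c) x = a1 / b2"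
    using PI[OF cp d2 fx] m0 unfolding g Mx by simp
  have py: "multiplier (ratmap c) y = b1 / a0"
    using PI[OF cp d2 fy] mI unfolding g My by simp
  have "hol_conj (ratmap c) (ratmap c')" unfolding c'_def by (rule hol_conj_ratmap_conjc[OF cp d])
  then show ?thesis using hol_conj_trans hA px py by metis
qed

lemma rel_mu3: "a * b \<noteq> 1 \<Longrightarrow> a * b * mu3 a b - (a + b + mu3 a b) + 2 = 0"
proof -
  assume ab: "a * b \<noteq> 1"
  then have "1 - a * b \<noteq> 0" by simp
  then have h: "mu3 a b * (1 - a * b) = 2 - a - b" unfolding mu3_def by simp
  have "a * b * mu3 a b - (a + b + mu3 a b) + 2 = (2 - a - b) - mu3 a b * (1 - a * b)"
    by (simp add: algebra_simps)
  then show ?thesis using h by simp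
qed

lemma mu3_eq: "a * b \<noteq> 1 \<Longrightarrow> a * b * m - (a + b + m) + 2 = 0 \<Longrightarrow> mu3 a b = m"
proof -
  assume ab: "a * b \<noteq> 1" and r: "a * b * m - (a + b + m) + 2 = 0"
  then have nz: "1 - a * b \<noteq> 0" by simp
  have "m * (1 - a * b) = 2 - a - b" using r by (simp add: algebra_simps)
  then show ?thesis unfolding mu3_def using nz by (simp add: field_simps)
qed

lemma in_Rat2: "coprime_forms c \<Longrightarrow> ratmap c \<in> Rat2"
  unfolding Rat2_def by blast

lemma Rat2E: "f \<in> Rat2 \<Longrightarrow> (\<And>c. coprime_forms c \<Longrightarrow> f = ratmap c \<Longrightarrow> P) \<Longrightarrow> P"
  unfolding Rat2_def by blast

lemma NF:
  assumes "f \<in> Rat2"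
  shows "(\<exists>a b. a * b \<noteq> 1 \<and> hol_conj f (ratmap (cN a b)) \<and> fix_multipliers f = {#a, b, mu3 a b#})
       \<or> (hol_conj f (ratmap cT) \<and> fix_multipliers f = {#1, 1, 1#})"
proof -
  from assms obtain c where cp: "coprime_forms c" and f: "f = ratmap c" by (rule Rat2E)
  from reduce[OF cp] show ?thesis
  proof
    assume "\<exists>a b. a * b \<noteq> 1 \<and> hol_conj (ratmap c) (ratmap (cN a b))"
    then obtain a b where ab: "a * b \<noteq> 1" and h: "hol_conj (ratmap c) (ratmap (cN a b))" by blast
    have "fix_multipliers f = {#a, b, mu3 a b#}"
      using hol_conj_fix_multipliers[OF cp h] fm_cN[OF ab] f by simp
    then show ?thesis using ab h f by blast
  next
    assume h: "hol_conj (ratmap c) (ratmap cT)"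
    have "fix_multipliers f = {#1, 1, 1#}"
      using hol_conj_fix_multipliers[OF cp h] fm_cT f by simp
    then show ?thesis using h f by blast
  qed
qed

lemma part1: "\<forall>f\<in>Rat2. \<exists>m1 m2 m3. fix_multipliers f = {#m1, m2, m3#} \<and>
            m1 * m2 * m3 - (m1 + m2 + m3) + 2 = 0"
proof
  fix f assume "f \<in> Rat2"
  from NF[OF this] show "\<exists>m1 m2 m3. fix_multipliers f = {#m1, m2, m3#} \<and> m1 * m2 * m3 - (m1 + m2 + m3) + 2 = 0"
  proof
    assume "\<exists>a b. a * b \<noteq> 1 \<and> hol_conj f (ratmap (cN a b)) \<and> fix_multipliers f = {#a, b, mu3 a b#}"
    then obtain a b where "a * b \<noteq> 1" "fix_multipliers f = {#a, b, mu3 a b#}" by blast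
    then show ?thesis using rel_mu3 by blast
  next
    assume "hol_conj f (ratmap cT) \<and> fix_multipliers f = {#1, 1, 1#}"
    then show ?thesis by (intro exI[of _ 1]) simp
  qed
qed

lemma part2: "\<forall>m1 m2 m3 :: complex. m1 * m2 * m3 - (m1 + m2 + m3) + 2 = 0 \<longrightarrow>
            (\<exists>f\<in>Rat2. fix_multipliers f = {#m1, m2, m3#})"
proof (intro allI impI)
  fix m1 m2 m3 :: complex assume r: "m1 * m2 * m3 - (m1 + m2 + m3) + 2 = 0"
  show "\<exists>f\<in>Rat2. fix_multipliers f = {#m1, m2, m3#}"
  proof (cases "m1 * m2 \<noteq> 1")
    case True
    have "fix_multipliers (ratmap (cN m1 m2)) = {#m1, m2, m3#}"
      using fm_cN[OF True] mu3_eq[OF True r] by simp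
    then show ?thesis using in_Rat2[OF coprime_cN[OF True]] by blast
  next
    case F12: False
    show ?thesis
    proof (cases "m1 * m3 \<noteq> 1")
      case True
      have r': "m1 * m3 * m2 - (m1 + m3 + m2) + 2 = 0" using r by (simp add: algebra_simps)
      have "fix_multipliers (ratmap (cN m1 m3)) = {#m1, m2, m3#}"
        using fm_cN[OF True] mu3_eq[OF True r'] by (simp add: add_mset_commute)
      then show ?thesis using in_Rat2[OF coprime_cN[OF True]] by blast
    next
      case F13: False
      show ?thesis
      proof (cases "m2 * m3 \<noteq> 1")
        case True
        have r': "m2 * m3 * m1 - (m2 + m3 + m1) + 2 = 0" using r by (simp add: algebra_simps)
        have "fix_multipliers (ratmap (cN m2 m3)) = {#m1, m2, m3#}"
          using fm_cN[OF True] mu3_eq[OF True r'] by (simp add: add_mset_commute)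
        then show ?thesis using in_Rat2[OF coprime_cN[OF True]] by blast
      next
        case F23: False
        have p12: "m1 * m2 = 1" and p13: "m1 * m3 = 1" using F12 F13 by auto
        have s: "m1 + m2 = 2" using r p12 by (simp add: algebra_simps)
        have "(m1 - 1)^2 = 0"
        proof -
          have "(m1 - 1)^2 = m1 * m1 - 2 * m1 + 1" by (simp add: power2_eq_square algebra_simps)
          also have "\<dots> = m1 * (m1 + m2) - 2 * m1 + 1 - m1 * m2" by (simp add: algebra_simps)
          also have "\<dots> = 0" using s p12 by simp
          finally show ?thesis .
        qed
        then have m1: "m1 = 1" by simp
        then have "m2 = 1" "m3 = 1" using p12 p13 by auto
        then show ?thesis using fm_cT in_Rat2[OF coprime_cT] m1 by blast
      qed
    qed
  qed
qed

lemma mset3_pairs: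
  assumes "{#a', b', c'#} = {#x1, x2, x3#}"
  shows "(a' = x1 \<and> b' = x2) \<or> (a' = x1 \<and> b' = x3) \<or> (a' = x2 \<and> b' = x1) \<or>
         (a' = x2 \<and> b' = x3) \<or> (a' = x3 \<and> b' = x1) \<or> (a' = x3 \<and> b' = x2)"
  using assms by (auto simp: add_eq_conv_ex)


lemma mult_cN_0: "multiplier (ratmap (cN a b)) (Some 0) = a"
  by (subst mult_Some) (simp_all add: cN_F cN_G, simp add: cN_def Fx_def Gy_def)

lemma mult_cN_inf: "multiplier (ratmap (cN a b)) None = b"
  by (rule mult_None[of _ 1 a 0 b 1, simplified]) (simp add: cN_def)

lemma mult_cN_z3:
  assumes ab: "a * b \<noteq> 1" and b: "b \<noteq> 1"
  shows "multiplier (ratmap (cN a b)) (Some ((1 - a) / (1 - b))) = mu3 a b"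
proof -
  define z where "z = (1 - a) / (1 - b)"
  have ez: "z * (1 - b) = 1 - a" using b by (simp add: z_def)
  have Gz: "b * z + 1 = (1 - a * b) / (1 - b)" using b by (simp add: z_def field_simps)
  then have Gz': "formG (cN a b) z 1 \<noteq> 0" using ab b by (simp add: cN_G)
  have Fz: "formF (cN a b) z 1 = z * formG (cN a b) z 1"
  proof -
    have "z^2 + a * z - z * (b * z + 1) = z * (z * (1 - b) - (1 - a))" by (simp add: power2_eq_square algebra_simps)
    then show ?thesis using ez by (simp add: cN_F cN_G)
  qed
  have "multiplier (ratmap (cN a b)) (Some z) = ((2 + b) * z + a + 2) / (b * z + 1) - 2"
    unfolding mult_Some[OF Gz' Fz] by (simp add: cN_def Fx_def Gy_def formG_def algebra_simps)
  also have "\<dots> = ((2 - b) * z + a) / (b * z + 1)"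
  proof -
    have nz: "b * z + 1 \<noteq> 0" using Gz' by (simp add: cN_G)
    have "((2 + b) * z + a + 2) = ((2 - b) * z + a) + 2 * (b * z + 1)" by (simp add: algebra_simps)
    then have "((2 + b) * z + a + 2) / (b * z + 1) = ((2 - b) * z + a) / (b * z + 1) + 2 * (b * z + 1) / (b * z + 1)"
      by (simp only: add_divide_distrib)
    also have "2 * (b * z + 1) / (b * z + 1) = 2" by (rule nonzero_mult_div_cancel_right[OF nz])
    finally show ?thesis by simp
  qed
  also have "(2 - b) * z + a = (2 - a - b) / (1 - b)"
    using b by (simp add: z_def field_simps)
  also have "((2 - a - b) / (1 - b)) / (b * z + 1) = mu3 a b"
    unfolding Gz mu3_def using b by simp
  finally show ?thesis unfolding z_def .
qed

lemma NN:
  assumes ab: "a * b \<noteq> 1" and ab': "a' * b' \<noteq> 1" and eq: "{#a, b, mu3 a b#} = {#a', b', mu3 a' b'#}"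
  shows "hol_conj (ratmap (cN a b)) (ratmap (cN a' b'))"
proof -
  define c where "c = mu3 a b"
  define N where "N = ratmap (cN a b)"
  define P3 where "P3 = (if b = 1 then None else Some ((1 - a) / (1 - b)))"
  have fs: "{p. N p = p} = {Some 0, None} \<union> (if b = 1 then {} else {Some ((1 - a) / (1 - b))})"
    unfolding N_def by (rule fixset_cN[OF ab])
  have f1: "N (Some 0) = Some 0" and f2: "N None = None" and f3: "N P3 = P3"
    using fs unfolding P3_def by (auto split: if_splits)
  have mu1: "multiplier N (Some 0) = a" unfolding N_def by (rule mult_cN_0)
  have mu2: "multiplier N None = b" unfolding N_def by (rule mult_cN_inf)
  have mu3': "multiplier N P3 = c"
  proof (cases "b = 1")
    case True
    then have "a \<noteq> 1" using ab by auto
    then have "c = 1" using True by (simp add: c_def mu3_def)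
    then show ?thesis using True mu2 by (simp add: P3_def)
  next
    case False
    then show ?thesis unfolding P3_def N_def c_def using mult_cN_z3[OF ab False] by simp
  qed
  have cpN: "coprime_forms (cN a b)" by (rule coprime_cN[OF ab])
  have Gn: "hol_conj N (ratmap (cN (multiplier N P) (multiplier N Q)))"
    if "N P = P" "N Q = Q" "P \<noteq> Q" for P Q
    unfolding N_def by (rule Gen[OF cpN that(3) that(1,2)[unfolded N_def]])
  have d13: "Some 0 \<noteq> P3" if "a * c \<noteq> 1"
  proof
    assume e: "Some 0 = P3"
    then have b: "b \<noteq> 1" by (simp add: P3_def split: if_splits)
    with e have "(1 - a) / (1 - b) = 0" by (simp add: P3_def)
    with b have "a = 1" by simp
    with b have "c = 1" by (simp add: c_def mu3_def)
    with \<open>a = 1\<close> that show False by simp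
  qed
  have d23: "None \<noteq> P3" if "b * c \<noteq> 1"
  proof
    assume e: "None = P3"
    then have b: "b = 1" by (simp add: P3_def split: if_splits)
    then have "a \<noteq> 1" using ab by auto
    then have "c = 1" using b by (simp add: c_def mu3_def)
    with b that show False by simp
  qed
  from mset3_pairs[OF eq[symmetric, folded c_def]]
  have "hol_conj N (ratmap (cN a' b'))"
  proof (elim disjE conjE)
    assume "a' = a" "b' = b" then show ?thesis using Gn[OF f1 f2] mu1 mu2 by simp
  next
    assume e: "a' = a" "b' = c" then show ?thesis using Gn[OF f1 f3 d13] mu1 mu3' ab' by simp
  next
    assume "a' = b" "b' = a" then show ?thesis using Gn[OF f2 f1] mu1 mu2 by simp
  next
    assume e: "a' = b" "b' = c" then show ?thesis using Gn[OF f2 f3 d23] mu2 mu3' ab' by simp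
  next
    assume e: "a' = c" "b' = a" then show ?thesis using Gn[OF f3 f1 d13[THEN not_sym]] mu1 mu3' ab' by (simp add: mult.commute)
  next
    assume e: "a' = c" "b' = b" then show ?thesis using Gn[OF f3 f2 d23[THEN not_sym]] mu2 mu3' ab' by (simp add: mult.commute)
  qed
  then show ?thesis unfolding N_def .
qed

lemma part3: "\<forall>f\<in>Rat2. \<forall>g\<in>Rat2. hol_conj f g \<longleftrightarrow> fix_multipliers f = fix_multipliers g"
proof (intro ballI iffI)
  fix f g assume f: "f \<in> Rat2" and g: "g \<in> Rat2"
  {
    assume h: "hol_conj f g"
    from f obtain c where cp: "coprime_forms c" and fc: "f = ratmap c" by (rule Rat2E)
    show "fix_multipliers f = fix_multipliers g" using hol_conj_fix_multipliers[OF cp] h fc by simp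
  }
  assume eq: "fix_multipliers f = fix_multipliers g"
  from NF[OF f] show "hol_conj f g"
  proof
    assume "\<exists>a b. a * b \<noteq> 1 \<and> hol_conj f (ratmap (cN a b)) \<and> fix_multipliers f = {#a, b, mu3 a b#}"
    then obtain a b where ab: "a * b \<noteq> 1" and hf: "hol_conj f (ratmap (cN a b))"
      and mf: "fix_multipliers f = {#a, b, mu3 a b#}" by blast
    from NF[OF g] show ?thesis
    proof
      assume "\<exists>a b. a * b \<noteq> 1 \<and> hol_conj g (ratmap (cN a b)) \<and> fix_multipliers g = {#a, b, mu3 a b#}"
      then obtain a' b' where ab': "a' * b' \<noteq> 1" and hg: "hol_conj g (ratmap (cN a' b'))"
        and mg: "fix_multipliers g = {#a', b', mu3 a' b'#}" by blast
      have "hol_conj (ratmap (cN a b)) (ratmap (cN a' b'))"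
        by (rule NN[OF ab ab']) (use eq mf mg in simp)
      then show ?thesis using hf hg hol_conj_trans hol_conj_sym by metis
    next
      assume "hol_conj g (ratmap cT) \<and> fix_multipliers g = {#1, 1, 1#}"
      then have "{#a, b, mu3 a b#} = {#1, 1, 1#}" using eq mf by simp
      then have "a \<in># {#1, 1, 1#}" "b \<in># {#1, 1, 1#}" by (metis add_mset_commute union_single_eq_member)+
      then have "a = 1" "b = 1" by auto
      with ab show ?thesis by simp
    qed
  next
    assume hf: "hol_conj f (ratmap cT) \<and> fix_multipliers f = {#1, 1, 1#}"
    from NF[OF g] show ?thesis
    proof
      assume "\<exists>a b. a * b \<noteq> 1 \<and> hol_conj g (ratmap (cN a b)) \<and> fix_multipliers g = {#a, b, mu3 a b#}"
      then obtain a b where ab: "a * b \<noteq> 1" and mg: "fix_multipliers g = {#a, b, mu3 a b#}" by blast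
      then have "{#a, b, mu3 a b#} = {#1, 1, 1#}" using eq hf by simp
      then have "a \<in># {#1, 1, 1#}" "b \<in># {#1, 1, 1#}" by (metis add_mset_commute union_single_eq_member)+
      then have "a = 1" "b = 1" by auto
      with ab show ?thesis by simp
    next
      assume "hol_conj g (ratmap cT) \<and> fix_multipliers g = {#1, 1, 1#}"
      then show ?thesis using hf hol_conj_trans hol_conj_sym by metis
    qed
  qed
qed


lemma sigma12_eq: "sigma12 {#m1, m2, m3#} = (m1 + m2 + m3, m1 * m2 + m1 * m3 + m2 * m3)"
  unfolding sigma12_def
proof (rule the_equality)
  show "\<exists>n1 n2 n3. {#m1, m2, m3#} = {#n1, n2, n3#} \<and>
    (m1 + m2 + m3, m1 * m2 + m1 * m3 + m2 * m3) = (n1 + n2 + n3, n1 * n2 + n1 * n3 + n2 * n3)" by blast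
  fix s assume "\<exists>n1 n2 n3. {#m1, m2, m3#} = {#n1, n2, n3#} \<and> s = (n1 + n2 + n3, n1 * n2 + n1 * n3 + n2 * n3)"
  then obtain n1 n2 n3 where e: "{#m1, m2, m3#} = {#n1, n2, n3#}" and s: "s = (n1 + n2 + n3, n1 * n2 + n1 * n3 + n2 * n3)"
    by blast
  have S: "m1 + m2 + m3 = n1 + n2 + n3" using arg_cong[OF e, of sum_mset] by (simp add: algebra_simps)
  have Q: "m1^2 + m2^2 + m3^2 = n1^2 + n2^2 + n3^2"
    using arg_cong[OF e, of "\<lambda>M. sum_mset (image_mset (\<lambda>x. x^2) M)"] by (simp add: algebra_simps)
  have "2 * (m1 * m2 + m1 * m3 + m2 * m3) = (m1 + m2 + m3)^2 - (m1^2 + m2^2 + m3^2)"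
    by (simp add: power2_eq_square algebra_simps)
  also have "\<dots> = (n1 + n2 + n3)^2 - (n1^2 + n2^2 + n3^2)" unfolding S Q ..
  also have "\<dots> = 2 * (n1 * n2 + n1 * n3 + n2 * n3)" by (simp add: power2_eq_square algebra_simps)
  finally have h2: "2 * (m1 * m2 + m1 * m3 + m2 * m3) = 2 * (n1 * n2 + n1 * n3 + n2 * n3)" .
  then have "m1 * m2 + m1 * m3 + m2 * m3 = n1 * n2 + n1 * n3 + n2 * n3"
    by (metis mult_left_cancel zero_neq_numeral)
  then show "s = (m1 + m2 + m3, m1 * m2 + m1 * m3 + m2 * m3)" using s S by simp
qed

lemma mset2_sym:
  fixes m2 m3 n2 n3 :: complex
  assumes s: "m2 + m3 = n2 + n3" and p: "m2 * m3 = n2 * n3"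
  shows "{#m2, m3#} = {#n2, n3#}"
proof -
  have "(n2 - m2) * (n2 - m3) = n2 * n2 - (m2 + m3) * n2 + m2 * m3" by (simp add: algebra_simps)
  also have "\<dots> = 0" unfolding s p by (simp add: algebra_simps)
  finally have "n2 = m2 \<or> n2 = m3" by simp
  then show ?thesis
  proof
    assume "n2 = m2" then have "n3 = m3" using s by simp
    then show ?thesis using \<open>n2 = m2\<close> by simp
  next
    assume "n2 = m3" then have "n3 = m2" using s by simp
    then show ?thesis using \<open>n2 = m3\<close> by (simp add: add_mset_commute)
  qed
qed

lemma mset3_sym_first:
  fixes m1 m2 m3 n1 n2 n3 :: complex
  assumes s: "m1 + m2 + m3 = n1 + n2 + n3" and e: "m1 * m2 + m1 * m3 + m2 * m3 = n1 * n2 + n1 * n3 + n2 * n3"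
    and n1: "n1 = m1"
  shows "{#m1, m2, m3#} = {#n1, n2, n3#}"
proof -
  have s': "m2 + m3 = n2 + n3" using s n1 by simp
  have "m1 * (m2 + m3) + m2 * m3 = n1 * (n2 + n3) + n2 * n3" using e by (simp add: algebra_simps)
  then have p: "m2 * m3 = n2 * n3" using s' n1 by simp
  from mset2_sym[OF s' p] n1 show ?thesis by simp
qed

lemma mset3_sym:
  fixes m1 m2 m3 n1 n2 n3 :: complex
  assumes s: "m1 + m2 + m3 = n1 + n2 + n3" and e: "m1 * m2 + m1 * m3 + m2 * m3 = n1 * n2 + n1 * n3 + n2 * n3"
    and p: "m1 * m2 * m3 = n1 * n2 * n3"
  shows "{#m1, m2, m3#} = {#n1, n2, n3#}"
proof -
  have "(n1 - m1) * (n1 - m2) * (n1 - m3) = n1^3 - (m1 + m2 + m3) * n1^2 + (m1 * m2 + m1 * m3 + m2 * m3) * n1 - m1 * m2 * m3"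
    by (simp add: power2_eq_square power3_eq_cube algebra_simps)
  also have "\<dots> = n1^3 - (n1 + n2 + n3) * n1^2 + (n1 * n2 + n1 * n3 + n2 * n3) * n1 - n1 * n2 * n3"
    unfolding s e p ..
  also have "\<dots> = 0" by (simp add: power2_eq_square power3_eq_cube algebra_simps)
  finally have "n1 = m1 \<or> n1 = m2 \<or> n1 = m3" by simp
  then show ?thesis
  proof (elim disjE)
    assume "n1 = m1" then show ?thesis using mset3_sym_first[OF s e] by simp
  next
    assume h: "n1 = m2"
    have "{#m2, m1, m3#} = {#n1, n2, n3#}"
      by (rule mset3_sym_first) (use s e h in \<open>simp_all add: algebra_simps\<close>)
    then show ?thesis by (simp add: add_mset_commute)
  next
    assume h: "n1 = m3"
    have "{#m3, m1, m2#} = {#n1, n2, n3#}"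
      by (rule mset3_sym_first) (use s e h in \<open>simp_all add: algebra_simps\<close>)
    then show ?thesis by (simp add: add_mset_commute)
  qed
qed

lemma cubic_roots:
  fixes s1 s2 :: complex
  shows "\<exists>m1 m2 m3. m1 + m2 + m3 = s1 \<and> m1 * m2 + m1 * m3 + m2 * m3 = s2 \<and> m1 * m2 * m3 = s1 - 2"
proof -
  have "\<not> (\<exists>a l. a \<noteq> 0 \<and> l = 0 \<and> [:-(s1 - 2), s2, -s1, 1:] = pCons a l)" by auto
  then obtain m1 where "poly [:-(s1 - 2), s2, -s1, 1:] m1 = 0" using fundamental_theorem_of_algebra_alt by blast
  then have c1: "m1^3 - s1 * m1^2 + s2 * m1 = s1 - 2"
    by (simp add: power2_eq_square power3_eq_cube algebra_simps)
  define B where "B = s1 - m1"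
  define C where "C = s2 - m1 * B"
  have "\<not> (\<exists>a l. a \<noteq> 0 \<and> l = 0 \<and> [:C, -B, 1:] = pCons a l)" by auto
  then obtain m2 where "poly [:C, -B, 1:] m2 = 0" using fundamental_theorem_of_algebra_alt by blast
  then have q: "B * m2 - m2 * m2 = C" by (simp add: algebra_simps)
  define m3 where "m3 = B - m2"
  have S: "m1 + m2 + m3 = s1" by (simp add: m3_def B_def)
  have E: "m1 * m2 + m1 * m3 + m2 * m3 = s2"
  proof -
    have "m1 * m2 + m1 * m3 + m2 * m3 = m1 * B + (B * m2 - m2 * m2)" by (simp add: m3_def algebra_simps)
    also have "\<dots> = s2" unfolding q C_def by simp
    finally show ?thesis .
  qed
  have P: "m1 * m2 * m3 = s1 - 2"
  proof -
    have "m1 * m2 * m3 = m1 * (B * m2 - m2 * m2)" by (simp add: m3_def algebra_simps)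
    also have "\<dots> = m1 * C" using q by simp
    also have "\<dots> = m1^3 - s1 * m1^2 + s2 * m1" unfolding C_def B_def by (simp add: power2_eq_square power3_eq_cube algebra_simps)
    also have "\<dots> = s1 - 2" by (rule c1)
    finally show ?thesis .
  qed
  show ?thesis using S E P by blast
qed


lemma class_eq: "f \<in> Rat2 \<Longrightarrow> conj_rel `` {f} = {g \<in> Rat2. hol_conj f g}"
  by (auto simp: conj_rel_def)

lemma sig_class:
  assumes f: "f \<in> Rat2"
  shows "(\<lambda>g. sigma12 (fix_multipliers g)) ` (conj_rel `` {f}) = {sigma12 (fix_multipliers f)}"
proof -
  have "fix_multipliers g = fix_multipliers f" if "g \<in> Rat2" "hol_conj f g" for g
    using part3 f that by metis
  then have "(\<lambda>g. sigma12 (fix_multipliers g)) ` {g \<in> Rat2. hol_conj f g} =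
      (\<lambda>g. sigma12 (fix_multipliers f)) ` {g \<in> Rat2. hol_conj f g}"
    by (intro image_cong) auto
  also have "\<dots> = {sigma12 (fix_multipliers f)}"
    by (rule image_constant[of f]) (use f hol_conj_refl in simp)
  finally show ?thesis unfolding class_eq[OF f] .
qed

lemma part4: "bij_betw (\<lambda>C. the_elem ((\<lambda>f. sigma12 (fix_multipliers f)) ` C)) M2 (UNIV :: (complex \<times> complex) set)"
proof -
  define F where "F = (\<lambda>C. the_elem ((\<lambda>f. sigma12 (fix_multipliers f)) ` C))"
  have FC: "F (conj_rel `` {f}) = sigma12 (fix_multipliers f)" if "f \<in> Rat2" for f
    unfolding F_def sig_class[OF that] by simp
  have inj: "inj_on F M2"
  proof (rule inj_onI)
    fix C1 C2 assume C1: "C1 \<in> M2" and C2: "C2 \<in> M2" and e: "F C1 = F C2"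
    from C1 obtain f1 where f1: "f1 \<in> Rat2" and C1e: "C1 = conj_rel `` {f1}" unfolding M2_def by (rule quotientE)
    from C2 obtain f2 where f2: "f2 \<in> Rat2" and C2e: "C2 = conj_rel `` {f2}" unfolding M2_def by (rule quotientE)
    obtain m1 m2 m3 where m: "fix_multipliers f1 = {#m1, m2, m3#}" and rm: "m1 * m2 * m3 - (m1 + m2 + m3) + 2 = 0"
      using part1 f1 by blast
    obtain n1 n2 n3 where n: "fix_multipliers f2 = {#n1, n2, n3#}" and rn: "n1 * n2 * n3 - (n1 + n2 + n3) + 2 = 0"
      using part1 f2 by blast
    from e have "sigma12 (fix_multipliers f1) = sigma12 (fix_multipliers f2)"
      unfolding C1e C2e FC[OF f1] FC[OF f2] .
    then have s: "m1 + m2 + m3 = n1 + n2 + n3" and e2: "m1 * m2 + m1 * m3 + m2 * m3 = n1 * n2 + n1 * n3 + n2 * n3"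
      unfolding m n sigma12_eq by auto
    have p: "m1 * m2 * m3 = n1 * n2 * n3"
    proof -
      have "m1 * m2 * m3 = (m1 + m2 + m3) - 2" using rm by (simp add: algebra_simps)
      also have "\<dots> = (n1 + n2 + n3) - 2" unfolding s ..
      also have "\<dots> = n1 * n2 * n3" using rn by (simp add: algebra_simps)
      finally show ?thesis .
    qed
    have "fix_multipliers f1 = fix_multipliers f2" unfolding m n by (rule mset3_sym[OF s e2 p])
    then have h: "hol_conj f1 f2" using part3 f1 f2 by blast
    have "{g \<in> Rat2. hol_conj f1 g} = {g \<in> Rat2. hol_conj f2 g}"
    proof (intro set_eqI iffI)
      fix g assume "g \<in> {g \<in> Rat2. hol_conj f1 g}"
      then show "g \<in> {g \<in> Rat2. hol_conj f2 g}" using hol_conj_trans[OF hol_conj_sym[OF h]] by simp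
    next
      fix g assume "g \<in> {g \<in> Rat2. hol_conj f2 g}"
      then show "g \<in> {g \<in> Rat2. hol_conj f1 g}" using hol_conj_trans[OF h] by simp
    qed
    then show "C1 = C2" unfolding C1e C2e class_eq[OF f1] class_eq[OF f2] .
  qed
  have surj: "F ` M2 = UNIV"
  proof (intro set_eqI iffI)
    fix s :: "complex \<times> complex"
    obtain s1 s2 where s: "s = (s1, s2)" by (cases s)
    obtain m1 m2 m3 where S: "m1 + m2 + m3 = s1" and E: "m1 * m2 + m1 * m3 + m2 * m3 = s2"
      and P: "m1 * m2 * m3 = s1 - 2" using cubic_roots by blast
    have "m1 * m2 * m3 - (m1 + m2 + m3) + 2 = 0" using S P by simp
    then obtain f where f: "f \<in> Rat2" and fm: "fix_multipliers f = {#m1, m2, m3#}" using part2 by blast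
    have "conj_rel `` {f} \<in> M2" unfolding M2_def using f by (rule quotientI)
    moreover have "F (conj_rel `` {f}) = s" unfolding FC[OF f] fm sigma12_eq s S E ..
    ultimately show "s \<in> F ` M2" by (rule rev_image_eqI[OF _ sym])
  qed simp
  have "bij_betw F M2 UNIV" unfolding bij_betw_def using inj surj by blast
  then show ?thesis unfolding F_def .
qed

theorem lemma3p1:
  shows "(\<forall>f\<in>Rat2. \<exists>m1 m2 m3. fix_multipliers f = {#m1, m2, m3#} \<and>
            m1 * m2 * m3 - (m1 + m2 + m3) + 2 = 0)
       \<and> (\<forall>m1 m2 m3 :: complex. m1 * m2 * m3 - (m1 + m2 + m3) + 2 = 0 \<longrightarrow>
            (\<exists>f\<in>Rat2. fix_multipliers f = {#m1, m2, m3#}))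
       \<and> (\<forall>f\<in>Rat2. \<forall>g\<in>Rat2. hol_conj f g \<longleftrightarrow> fix_multipliers f = fix_multipliers g)
       \<and> bij_betw (\<lambda>C. the_elem ((\<lambda>f. sigma12 (fix_multipliers f)) ` C)) M2 (UNIV :: (complex \<times> complex) set)"
  by (intro conjI part1 part2 part3 part4)

end
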